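(* The commutator subgroup $F_\tau'=[F_\tau,F_\tau]$ is a simple group.
   Context: Let $\tau=(\sqrt5-1)/2$. $F_\tau$ is the group, under composition, of orientation-preserving homeomorphisms of $[0,1]$ that are piecewise linear with finitely many breakpoints, all breakpoints in $\mathbb{Z}[\tau]=\{a+b\tau:a,b\in\mathbb{Z}\}$ and all slopes integer powers of $\tau$. *)

theory Defs
  imports "HOL-Analysis.Analysis" "HOL-Algebra.Algebra"
begin

definition tau :: real where "tau = (sqrt 5 - 1) / 2"

definition Ztau :: "real set" where
  "Ztau = {of_int a + of_int b * tau | a b. True}"

text \<open>Such maps are represented as functions real => real equal to the identity outside [0,1]
 (an extensional normalisation so that composition is the group law).\<close>
definition Ftau_set :: "(real \<Rightarrow> real) set" where
  "Ftau_set = {f.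
     (\<forall>x. x \<notin> {0..1} \<longrightarrow> f x = x) \<and>
     bij_betw f {0..1} {0..1} \<and> continuous_on {0..1} f \<and> strict_mono_on {0..1} f \<and>
     (\<exists>xs :: real list.
        sorted_wrt (<) xs \<and> xs \<noteq> [] \<and> hd xs = 0 \<and> last xs = 1 \<and> set xs \<subseteq> Ztau \<and>
        (\<forall>i. Suc i < length xs \<longrightarrow>
           (\<exists>(k::int) (c::real). \<forall>x \<in> {xs ! i .. xs ! Suc i}. f x = tau powi k * x + c)))}"

definition Ftau :: "(real \<Rightarrow> real) monoid" where
  "Ftau = \<lparr>carrier = Ftau_set, mult = (\<circ>), one = id\<rparr>"

text \<open>Simplicity for possibly infinite groups (HOL-Algebra's simple_group uses
 the cardinality order G > 1, which is only meaningful for finite groups).\<close>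
definition simple_grp :: "('a, 'b) monoid_scheme \<Rightarrow> bool" where
  "simple_grp G \<longleftrightarrow> group G \<and> carrier G \<noteq> {\<one>\<^bsub>G\<^esub>} \<and>
     (\<forall>H. H \<lhd> G \<longrightarrow> H = carrier G \<or> H = {\<one>\<^bsub>G\<^esub>})"

end

theory Submission
  imports Defs
begin

lemma sqrt5_sq: "sqrt 5 * sqrt 5 = (5::real)" by simp

lemma tau_pos: "tau > 0" unfolding tau_def by (simp add: real_less_rsqrt)
lemma tau_less1: "tau < 1"
proof -
  have "sqrt 5 < 3" by (rule real_less_lsqrt) auto
  then show ?thesis unfolding tau_def by simp
qed
lemma tau_sq: "tau * tau = 1 - tau"
  unfolding tau_def by (simp add: field_simps sqrt5_sq algebra_simps)
lemma tau_inv: "inverse tau = 1 + tau"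
  using tau_sq tau_pos by (simp add: field_simps)
lemma tau_ne0[simp]: "tau \<noteq> 0" using tau_pos by simp

lemma Ztau_iff: "x \<in> Ztau \<longleftrightarrow> (\<exists>a b::int. x = of_int a + of_int b * tau)"
  unfolding Ztau_def by auto

lemma Ztau_add: "x \<in> Ztau \<Longrightarrow> y \<in> Ztau \<Longrightarrow> x + y \<in> Ztau"
proof -
  assume "x \<in> Ztau" "y \<in> Ztau"
  then obtain a b c d where x: "x = of_int a + of_int b * tau" and y: "y = of_int c + of_int d * tau"
    unfolding Ztau_iff by auto
  have "x + y = of_int (a + c) + of_int (b + d) * tau" unfolding x y by (simp add: algebra_simps)
  then show ?thesis unfolding Ztau_iff by blast
qed
lemma Ztau_uminus: "x \<in> Ztau \<Longrightarrow> - x \<in> Ztau"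
proof -
  assume "x \<in> Ztau"
  then obtain a b where x: "x = of_int a + of_int b * tau" unfolding Ztau_iff by auto
  have "- x = of_int (- a) + of_int (- b) * tau" unfolding x by (simp add: algebra_simps)
  then show ?thesis unfolding Ztau_iff by blast
qed
lemma Ztau_diff: "x \<in> Ztau \<Longrightarrow> y \<in> Ztau \<Longrightarrow> x - y \<in> Ztau"
  using Ztau_add Ztau_uminus by (metis diff_conv_add_uminus)
lemma Ztau_int: "of_int a \<in> Ztau" unfolding Ztau_iff by (rule exI[of _ a], rule exI[of _ 0]) simp
lemma Ztau_0: "0 \<in> Ztau" using Ztau_int[of 0] by simp
lemma Ztau_1: "1 \<in> Ztau" using Ztau_int[of 1] by simp
lemma Ztau_tau: "tau \<in> Ztau" unfolding Ztau_iff by (rule exI[of _ 0], rule exI[of _ 1]) simp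
lemma Ztau_mult: "x \<in> Ztau \<Longrightarrow> y \<in> Ztau \<Longrightarrow> x * y \<in> Ztau"
proof -
  assume "x \<in> Ztau" "y \<in> Ztau"
  then obtain a b c d where x: "x = of_int a + of_int b * tau" and y: "y = of_int c + of_int d * tau"
    unfolding Ztau_iff by auto
  have "x * y = of_int (a * c + b * d) + of_int (a * d + b * c - b * d) * tau"
  proof -
    have sq: "tau * (tau * z) = z - tau * z" for z using tau_sq
      by (metis mult.assoc left_diff_distrib mult_1)
    show ?thesis unfolding x y by (simp add: algebra_simps sq)
  qed
  then show ?thesis unfolding Ztau_iff by blast
qed
lemma Ztau_inv_tau: "inverse tau \<in> Ztau" unfolding tau_inv using Ztau_add Ztau_1 Ztau_tau by blast
lemma Ztau_pow: "tau powi k \<in> Ztau"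
proof (cases "k \<ge> 0")
  case True
  have "tau ^ n \<in> Ztau" for n by (induction n) (auto intro: Ztau_mult Ztau_1 Ztau_tau)
  then show ?thesis using True by (simp add: power_int_def)
next
  case False
  have "(inverse tau) ^ n \<in> Ztau" for n by (induction n) (auto intro: Ztau_mult Ztau_1 Ztau_inv_tau)
  then show ?thesis using False by (simp add: power_int_def power_inverse)
qed
lemma Ztau_mult_pow_iff: "tau powi k * x \<in> Ztau \<longleftrightarrow> x \<in> Ztau"
proof
  assume "tau powi k * x \<in> Ztau"
  then have "tau powi (-k) * (tau powi k * x) \<in> Ztau" using Ztau_mult Ztau_pow by blast
  moreover have "tau powi (-k) * (tau powi k * x) = x"
    by (simp add: power_int_minus power_int_not_zero)
  ultimately show "x \<in> Ztau" by simp
qed (rule Ztau_mult[OF Ztau_pow])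

lemma Ztau_dense: assumes "a < (b::real)" shows "\<exists>z\<in>Ztau. a < z \<and> z < b"
proof -
  have "(\<lambda>n. tau ^ n) \<longlonglongrightarrow> 0" using tau_pos tau_less1 by (intro LIMSEQ_realpow_zero) auto
  then have "\<forall>\<^sub>F n in sequentially. tau ^ n < b - a" using assms
    by (intro order_tendstoD) auto
  then obtain n where n: "tau ^ n < b - a" by (meson eventually_sequentially order_refl)
  define e where "e = tau ^ n"
  have e: "e > 0" "e < b - a" using n tau_pos by (auto simp: e_def)
  define m where "m = floor (a / e) + 1"
  have "a / e < m" unfolding m_def by linarith
  then have 1: "a < m * e" using e by (simp add: field_simps)
  have "m - 1 \<le> a / e" unfolding m_def by simp
  then have "(m - 1) * e \<le> a" using e by (simp add: field_simps)
  then have 2: "m * e < b" using e by (simp add: algebra_simps)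
  have "e \<in> Ztau" unfolding e_def using Ztau_pow[of "int n"] by simp
  then have "of_int m * e \<in> Ztau" using Ztau_mult Ztau_int by blast
  then show ?thesis using 1 2 by blast
qed


definition fixo :: "real set \<Rightarrow> (real \<Rightarrow> real) \<Rightarrow> bool" where
  "fixo S f \<longleftrightarrow> (\<forall>x. x \<notin> S \<longrightarrow> f x = x)"

definition good :: "(real \<Rightarrow> real) \<Rightarrow> real set \<Rightarrow> bool" where
  "good f B \<longleftrightarrow> finite B \<and> B \<subseteq> Ztau \<inter> {0..1} \<and> 0 \<in> B \<and> 1 \<in> B \<and>
     (\<forall>a b. 0 \<le> a \<and> a < b \<and> b \<le> 1 \<and> (\<forall>y\<in>B. y \<le> a \<or> b \<le> y) \<longrightarrow>
        (\<exists>k::int. \<exists>c. \<forall>x\<in>{a..b}. f x = tau powi k * x + c))"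

lemma goodD: assumes "good f B"
  shows "finite B" "B \<subseteq> Ztau" "B \<subseteq> {0..1}" "0 \<in> B" "1 \<in> B"
    "\<And>a b. 0 \<le> a \<Longrightarrow> a < b \<Longrightarrow> b \<le> 1 \<Longrightarrow> (\<forall>y\<in>B. y \<le> a \<or> b \<le> y) \<Longrightarrow>
        (\<exists>k::int. \<exists>c. \<forall>x\<in>{a..b}. f x = tau powi k * x + c)"
  using assms unfolding good_def by auto

lemma piece_right:
  assumes "finite B" "0 \<in> B" "1 \<in> B" "B \<subseteq> {0..1}" "0 \<le> x" "x < (1::real)"
  shows "\<exists>a b. a \<in> B \<and> b \<in> B \<and> a \<le> x \<and> x < b \<and> (\<forall>y\<in>B. y \<le> a \<or> b \<le> y)"
proof -
  define a where "a = Max {y\<in>B. y \<le> x}"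
  define b where "b = Min {y\<in>B. x < y}"
  have f1: "finite {y\<in>B. y \<le> x}" "finite {y\<in>B. x < y}" using assms by auto
  have n1: "0 \<in> {y\<in>B. y \<le> x}" "1 \<in> {y\<in>B. x < y}" using assms by auto
  have "a \<in> {y\<in>B. y \<le> x}" unfolding a_def using f1 n1 Max_in by blast
  moreover have "b \<in> {y\<in>B. x < y}" unfolding b_def using f1 n1 Min_in by blast
  moreover have "\<forall>y\<in>B. y \<le> a \<or> b \<le> y"
  proof
    fix y assume "y \<in> B"
    show "y \<le> a \<or> b \<le> y"
    proof (cases "y \<le> x")
      case True then show ?thesis unfolding a_def using f1 \<open>y\<in>B\<close> by (intro disjI1 Max_ge) auto
    next
      case False then show ?thesis unfolding b_def using f1 \<open>y\<in>B\<close> by (intro disjI2 Min_le) auto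
    qed
  qed
  ultimately show ?thesis by blast
qed

lemma piece_left:
  assumes "finite B" "0 \<in> B" "1 \<in> B" "B \<subseteq> {0..1}" "0 < x" "x \<le> (1::real)"
  shows "\<exists>a b. a \<in> B \<and> b \<in> B \<and> a < x \<and> x \<le> b \<and> (\<forall>y\<in>B. y \<le> a \<or> b \<le> y)"
proof -
  define a where "a = Max {y\<in>B. y < x}"
  define b where "b = Min {y\<in>B. x \<le> y}"
  have f1: "finite {y\<in>B. y < x}" "finite {y\<in>B. x \<le> y}" using assms by auto
  have n1: "0 \<in> {y\<in>B. y < x}" "1 \<in> {y\<in>B. x \<le> y}" using assms by auto
  have "a \<in> {y\<in>B. y < x}" unfolding a_def using f1 n1 Max_in by blast
  moreover have "b \<in> {y\<in>B. x \<le> y}" unfolding b_def using f1 n1 Min_in by blast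
  moreover have "\<forall>y\<in>B. y \<le> a \<or> b \<le> y"
  proof
    fix y assume "y \<in> B"
    show "y \<le> a \<or> b \<le> y"
    proof (cases "y < x")
      case True then show ?thesis unfolding a_def using f1 \<open>y\<in>B\<close> by (intro disjI1 Max_ge) auto
    next
      case False then show ?thesis unfolding b_def using f1 \<open>y\<in>B\<close> by (intro disjI2 Min_le) auto
    qed
  qed
  ultimately show ?thesis by blast
qed

lemma good_mono:
  assumes g: "good f B"
  shows "x \<in> {0..1} \<Longrightarrow> y \<in> {0..1} \<Longrightarrow> x < y \<Longrightarrow> f x < f y"
proof (induction "card (B \<inter> {x<..<y})" arbitrary: x y rule: less_induct)
  case (less x y)
  show ?case
  proof (cases "\<forall>z\<in>B. z \<le> x \<or> y \<le> z")
    case True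
    then obtain k c where kc: "\<forall>t\<in>{x..y}. f t = tau powi k * t + c"
      using goodD(6)[OF g, of x y] less.prems by auto
    have "tau powi k > 0" using tau_pos by simp
    then show ?thesis using kc less.prems by auto
  next
    case False
    then obtain z where z: "z \<in> B" "x < z" "z < y" by auto
    have fin: "finite (B \<inter> {x<..<y})" using goodD(1)[OF g] by auto
    have z01: "z \<in> {0..1}" using z less.prems by auto
    have "card (B \<inter> {x<..<z}) < card (B \<inter> {x<..<y})"
      by (rule psubset_card_mono[OF fin]) (use z in auto)
    then have 1: "f x < f z" using less.hyps less.prems z01 z by blast
    have "card (B \<inter> {z<..<y}) < card (B \<inter> {x<..<y})"
      by (rule psubset_card_mono[OF fin]) (use z in auto)
    then have 2: "f z < f y" using less.hyps less.prems z01 z by blast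
    show ?thesis using 1 2 by simp
  qed
qed

lemma good_cont:
  assumes g: "good f B"
  shows "continuous_on {0..1} f"
proof -
  define I where "I = {(a,b). a \<in> B \<and> b \<in> B \<and> a < b \<and> (\<forall>y\<in>B. y \<le> a \<or> b \<le> y)}"
  have finI: "finite I" by (rule finite_subset[of I "B \<times> B"]) (auto simp: I_def goodD(1)[OF g])
  have eq: "(\<Union>i\<in>I. {fst i..snd i}) = {0..1}"
  proof
    show "(\<Union>i\<in>I. {fst i..snd i}) \<subseteq> {0..1}" using goodD(3)[OF g] by (force simp: I_def)
    show "{0..1} \<subseteq> (\<Union>i\<in>I. {fst i..snd i})"
    proof
      fix x :: real assume x: "x \<in> {0..1}"
      show "x \<in> (\<Union>i\<in>I. {fst i..snd i})"
      proof (cases "x < 1")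
        case True
        then obtain a b where "a \<in> B \<and> b \<in> B \<and> a \<le> x \<and> x < b \<and> (\<forall>y\<in>B. y \<le> a \<or> b \<le> y)"
          using piece_right[OF goodD(1,4,5,3)[OF g], of x] x True by auto
        then show ?thesis unfolding I_def by (intro UN_I[of "(a,b)"]) auto
      next
        case False
        then obtain a b where "a \<in> B \<and> b \<in> B \<and> a < x \<and> x \<le> b \<and> (\<forall>y\<in>B. y \<le> a \<or> b \<le> y)"
          using piece_left[OF goodD(1,4,5,3)[OF g], of x] x False by auto
        then show ?thesis unfolding I_def by (intro UN_I[of "(a,b)"]) auto
      qed
    qed
  qed
  have "continuous_on (\<Union>i\<in>I. {fst i..snd i}) f"
  proof (rule continuous_on_closed_Union[OF finI])
    fix i assume i: "i \<in> I"
    then obtain a b where ab: "i = (a,b)" "a \<in> B" "b \<in> B" "a < b" "\<forall>y\<in>B. y \<le> a \<or> b \<le> y"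
      unfolding I_def by auto
    have h: "0 \<le> a" "b \<le> 1" using ab(2,3) goodD(3)[OF g] by auto
    obtain k c where kc: "\<forall>x\<in>{a..b}. f x = tau powi k * x + c"
      using goodD(6)[OF g h(1) ab(4) h(2) ab(5)] by blast
    have "continuous_on {a..b} (\<lambda>x. tau powi k * x + c)" by (intro continuous_intros)
    then show "continuous_on {fst i..snd i} f" using ab kc continuous_on_cong by fastforce
  qed auto
  then show ?thesis using eq by simp
qed

lemma Ftau_intro:
  assumes fx: "fixo {0..1} f" and f0: "f 0 = 0" and f1: "f 1 = 1" and g: "good f B"
  shows "f \<in> Ftau_set"
proof -
  have mono: "strict_mono_on {0..1} f" using good_mono[OF g] by (auto simp: strict_mono_on_def)
  have cont: "continuous_on {0..1} f" using good_cont[OF g] .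
  have img: "f ` {0..1} = {0..1}"
  proof
    show "f ` {0..1} \<subseteq> {0..1}"
    proof
      fix y assume "y \<in> f ` {0..1}"
      then obtain x where x: "x \<in> {0..1}" "y = f x" by auto
      have "f 0 \<le> f x" using good_mono[OF g, of 0 x] x by (cases "x = 0") auto
      moreover have "f x \<le> f 1" using good_mono[OF g, of x 1] x by (cases "x = 1") auto
      ultimately show "y \<in> {0..1}" using x f0 f1 by auto
    qed
    show "{0..1} \<subseteq> f ` {0..1}"
    proof
      fix y :: real assume y: "y \<in> {0..1}"
      then obtain x where "x \<in> {0..1}" "f x = y" using IVT'[of f 0 y 1] cont f0 f1 by auto
      then show "y \<in> f ` {0..1}" by auto
    qed
  qed
  have bij: "bij_betw f {0..1} {0..1}"
    unfolding bij_betw_def using img strict_mono_on_imp_inj_on[OF mono] by auto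
  define xs where "xs = sorted_list_of_set B"
  have fin: "finite B" using goodD(1)[OF g] .
  have setxs: "set xs = B" unfolding xs_def using fin by simp
  have sw: "sorted_wrt (<) xs" unfolding xs_def by simp
  have ne: "xs \<noteq> []" using setxs goodD(4)[OF g] by auto
  have B01: "B \<subseteq> {0..1}" using goodD(3)[OF g] .
  have hd: "hd xs = 0"
  proof -
    have "hd xs \<in> B" using ne setxs hd_in_set by blast
    then have "hd xs \<ge> 0" using B01 by auto
    moreover have "hd xs \<le> 0"
    proof -
      obtain j where j: "j < length xs" "xs ! j = 0" using goodD(4)[OF g] setxs by (metis in_set_conv_nth)
      show ?thesis
      proof (cases "j = 0")
        case True then show ?thesis using j ne by (simp add: hd_conv_nth)
      next
        case False
        then have "xs ! 0 < xs ! j" using sorted_wrt_nth_less[OF sw, of 0 j] j by auto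
        then show ?thesis using j ne by (simp add: hd_conv_nth)
      qed
    qed
    ultimately show ?thesis by simp
  qed
  have last: "last xs = 1"
  proof -
    have "last xs \<in> B" using ne setxs last_in_set by blast
    then have "last xs \<le> 1" using B01 by auto
    moreover have "last xs \<ge> 1"
    proof -
      obtain j where j: "j < length xs" "xs ! j = 1" using goodD(5)[OF g] setxs by (metis in_set_conv_nth)
      show ?thesis
      proof (cases "j = length xs - 1")
        case True then show ?thesis using j ne by (simp add: last_conv_nth)
      next
        case False
        then have "xs ! j < xs ! (length xs - 1)" using sorted_wrt_nth_less[OF sw, of j "length xs - 1"] j by auto
        then show ?thesis using j ne by (simp add: last_conv_nth)
      qed
    qed
    ultimately show ?thesis by simp
  qed
  have pieces: "\<forall>i. Suc i < length xs \<longrightarrow>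
           (\<exists>(k::int) (c::real). \<forall>x \<in> {xs ! i .. xs ! Suc i}. f x = tau powi k * x + c)"
  proof (intro allI impI)
    fix i assume i: "Suc i < length xs"
    have lt: "xs ! i < xs ! Suc i" using sorted_wrt_nth_less[OF sw, of i "Suc i"] i by auto
    have inB: "xs ! i \<in> B" "xs ! Suc i \<in> B" using i setxs nth_mem by (metis Suc_lessD)+
    have btw: "\<forall>y\<in>B. y \<le> xs ! i \<or> xs ! Suc i \<le> y"
    proof
      fix y assume "y \<in> B"
      then obtain j where j: "j < length xs" "xs ! j = y" using setxs by (metis in_set_conv_nth)
      show "y \<le> xs ! i \<or> xs ! Suc i \<le> y"
      proof (cases "j \<le> i")
        case True
        then show ?thesis using j sorted_wrt_nth_less[OF sw, of j i] i by (cases "j = i") auto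
      next
        case False
        then have "Suc i \<le> j" by simp
        then show ?thesis using j sorted_wrt_nth_less[OF sw, of "Suc i" j] by (cases "j = Suc i") auto
      qed
    qed
    show "\<exists>(k::int) (c::real). \<forall>x \<in> {xs ! i .. xs ! Suc i}. f x = tau powi k * x + c"
    proof -
      have h: "0 \<le> xs ! i" "xs ! Suc i \<le> 1" using inB B01 by auto
      show ?thesis by (rule goodD(6)[OF g h(1) lt h(2) btw])
    qed
  qed
  have "set xs \<subseteq> Ztau" using setxs goodD(2)[OF g] by simp
  then show ?thesis unfolding Ftau_set_def using fx bij cont mono sw ne hd last pieces
    unfolding fixo_def by blast
qed

lemma Ftau_setD:
  assumes "f \<in> Ftau_set"
  shows "fixo {0..1} f" "bij_betw f {0..1} {0..1}" "continuous_on {0..1} f" "strict_mono_on {0..1} f"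
    "\<exists>xs :: real list.
        sorted_wrt (<) xs \<and> xs \<noteq> [] \<and> hd xs = 0 \<and> last xs = 1 \<and> set xs \<subseteq> Ztau \<and>
        (\<forall>i. Suc i < length xs \<longrightarrow>
           (\<exists>(k::int) (c::real). \<forall>x \<in> {xs ! i .. xs ! Suc i}. f x = tau powi k * x + c))"
  using assms unfolding Ftau_set_def fixo_def by auto

lemma smono_less_iff: assumes "strict_mono_on {0..1} f" "x \<in> {0..1}" "y \<in> {0..(1::real)}"
  shows "(f x < (f y::real)) = (x < y)"
  using assms unfolding strict_mono_on_def by (metis linorder_neqE_linordered_idom order_less_asym order_less_irrefl)

lemma smono_le_iff: assumes "strict_mono_on {0..1} f" "x \<in> {0..1}" "y \<in> {0..(1::real)}"
  shows "(f x \<le> (f y::real)) = (x \<le> y)"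
  using smono_less_iff[OF assms(1) assms(3) assms(2)] by (simp add: not_less[symmetric])

lemma Ftau_maps: assumes "f \<in> Ftau_set" "x \<in> {0..1}" shows "f x \<in> {0..1}"
  using Ftau_setD(2)[OF assms(1)] assms(2) unfolding bij_betw_def by auto

lemma Ftau_01: assumes "f \<in> Ftau_set" shows "f 0 = 0" "f 1 = 1"
proof -
  have b: "bij_betw f {0..1} {0..1}" and m: "strict_mono_on {0..1} f" using Ftau_setD[OF assms] by auto
  obtain x where x: "x \<in> {0..1}" "f x = 0" using b unfolding bij_betw_def
    by (metis atLeastAtMost_iff imageE order_refl zero_le_one)
  have "f 0 \<ge> 0" using Ftau_maps[OF assms, of 0] by auto
  then have "\<not> 0 < x" using smono_less_iff[OF m, of 0 x] x by auto
  then show "f 0 = 0" using x by auto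
  obtain y where y: "y \<in> {0..1}" "f y = 1" using b unfolding bij_betw_def
    by (metis atLeastAtMost_iff imageE order_refl zero_le_one)
  have "f 1 \<le> 1" using Ftau_maps[OF assms, of 1] by auto
  then have "\<not> y < 1" using smono_less_iff[OF m, of y 1] y by auto
  then show "f 1 = 1" using y by auto
qed

lemma Ftau_bij: assumes "f \<in> Ftau_set" shows "bij f"
proof -
  have fx: "fixo {0..1} f" and b: "bij_betw f {0..1} {0..1}" using Ftau_setD[OF assms] by auto
  have "inj f"
  proof (rule injI)
    fix x y assume e: "f x = f y"
    show "x = y"
    proof (cases "x \<in> {0..1}"; cases "y \<in> {0..1}")
      assume "x \<in> {0..1}" "y \<in> {0..1}" then show ?thesis using b e unfolding bij_betw_def inj_on_def by auto
    next
      assume "x \<in> {0..1}" "y \<notin> {0..1}" then show ?thesis using e fx Ftau_maps[OF assms, of x] unfolding fixo_def by force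
    next
      assume "x \<notin> {0..1}" "y \<in> {0..1}" then show ?thesis using e fx Ftau_maps[OF assms, of y] unfolding fixo_def by force
    next
      assume "x \<notin> {0..1}" "y \<notin> {0..1}" then show ?thesis using e fx unfolding fixo_def by force
    qed
  qed
  moreover have "surj f"
  proof -
    have "y \<in> range f" for y
    proof (cases "y \<in> {0..1}")
      case True then have "y \<in> f ` {0..1}" using b unfolding bij_betw_def by auto
      then show ?thesis by auto
    next
      case False then show ?thesis using fx unfolding fixo_def by (metis rangeI)
    qed
    then show ?thesis by auto
  qed
  ultimately show ?thesis by (simp add: bij_def)
qed

lemma Ftau_good: assumes "f \<in> Ftau_set" shows "\<exists>B. good f B"
proof -
  obtain xs :: "real list" where sw: "sorted_wrt (<) xs" and ne: "xs \<noteq> []" and hd: "hd xs = 0"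
    and last: "last xs = 1" and Z: "set xs \<subseteq> Ztau" and pc: "\<forall>i. Suc i < length xs \<longrightarrow>
           (\<exists>(k::int) (c::real). \<forall>x \<in> {xs ! i .. xs ! Suc i}. f x = tau powi k * x + c)"
    using Ftau_setD(5)[OF assms] by blast
  have x0: "xs ! 0 = 0" using hd ne by (simp add: hd_conv_nth)
  have xl: "xs ! (length xs - 1) = 1" using last ne by (simp add: last_conv_nth)
  have lenpos: "length xs > 0" using ne by simp
  have rng: "xs ! j \<in> {0..1}" if "j < length xs" for j
  proof -
    have "xs ! 0 \<le> xs ! j" using sorted_wrt_nth_less[OF sw, of 0 j] that by (cases "j = 0") auto
    moreover have "xs ! j \<le> xs ! (length xs - 1)"
    proof (cases "j = length xs - 1")
      case False
      then have "j < length xs - 1" using that by linarith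
      then show ?thesis using sorted_wrt_nth_less[OF sw, of j "length xs - 1"] that lenpos by auto
    qed simp
    ultimately show ?thesis using x0 xl by auto
  qed
  have "good f (set xs)"
    unfolding good_def
  proof (intro conjI allI impI)
    show "finite (set xs)" by simp
    show "set xs \<subseteq> Ztau \<inter> {0..1}" using Z rng by (auto simp: in_set_conv_nth)
    show "0 \<in> set xs" using hd ne hd_in_set by fastforce
    show "1 \<in> set xs" using last ne last_in_set by fastforce
    fix a b :: real assume ab: "0 \<le> a \<and> a < b \<and> b \<le> 1 \<and> (\<forall>y\<in>set xs. y \<le> a \<or> b \<le> y)"
    define J where "J = {j. j < length xs \<and> xs ! j \<le> a}"
    have finJ: "finite J" unfolding J_def by simp
    have J0: "0 \<in> J" unfolding J_def using lenpos x0 ab by auto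
    define i where "i = Max J"
    have iJ: "i \<in> J" unfolding i_def using finJ J0 Max_in by blast
    have ilt: "Suc i < length xs"
    proof (rule ccontr)
      assume "\<not> Suc i < length xs"
      then have "i = length xs - 1" using iJ unfolding J_def by auto
      then show False using iJ xl ab unfolding J_def by auto
    qed
    have "Suc i \<notin> J"
    proof
      assume "Suc i \<in> J"
      then have "Suc i \<le> i" unfolding i_def using Max_ge[OF finJ] by blast
      then show False by simp
    qed
    then have "xs ! Suc i > a" using ilt unfolding J_def by auto
    moreover have "xs ! Suc i \<in> set xs" using ilt by simp
    ultimately have "b \<le> xs ! Suc i" using ab by force
    moreover have "xs ! i \<le> a" using iJ unfolding J_def by auto
    moreover obtain k c where "\<forall>x \<in> {xs ! i .. xs ! Suc i}. f x = tau powi k * x + c" using pc ilt by blast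
    ultimately show "\<exists>k c. \<forall>x\<in>{a..b}. f x = tau powi k * x + c" by (meson atLeastAtMost_iff order_trans)
  qed
  then show ?thesis by blast
qed

lemma good_Ztau:
  assumes g: "good g C" and g0: "g 0 = 0"
  shows "x \<in> {0..1} \<Longrightarrow> (g x \<in> Ztau) = (x \<in> Ztau)"
proof (induction "card {y\<in>C. y < x}" arbitrary: x rule: less_induct)
  case (less x)
  show ?case
  proof (cases "x = 0")
    case True then show ?thesis using g0 by simp
  next
    case False
    then obtain a b where ab: "a \<in> C" "b \<in> C" "a < x" "x \<le> b" "\<forall>y\<in>C. y \<le> a \<or> b \<le> y"
      using piece_left[OF goodD(1,4,5,3)[OF g], of x] less.prems by auto
    have h: "0 \<le> a" "b \<le> 1" using ab(1,2) goodD(3)[OF g] by auto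
    obtain k c where kc: "\<forall>t\<in>{a..b}. g t = tau powi k * t + c"
      using goodD(6)[OF g h(1) _ h(2) ab(5)] ab by force
    have gx: "g x = g a + tau powi k * (x - a)" using kc ab h by (simp add: algebra_simps)
    have fin: "finite {y\<in>C. y < x}" using goodD(1)[OF g] by auto
    have cd: "card {y\<in>C. y < a} < card {y\<in>C. y < x}"
      by (rule psubset_card_mono[OF fin]) (use ab in auto)
    have "(g a \<in> Ztau) = (a \<in> Ztau)" using less.hyps[OF cd] h ab(3) less.prems by auto
    then have ga: "g a \<in> Ztau" using ab(1) goodD(2)[OF g] by auto
    have "(g x \<in> Ztau) = (tau powi k * (x - a) \<in> Ztau)"
      using gx ga Ztau_add Ztau_diff by (metis add_diff_cancel_left')
    also have "\<dots> = (x - a \<in> Ztau)" by (rule Ztau_mult_pow_iff)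
    also have "\<dots> = (x \<in> Ztau)" using ab(1) goodD(2)[OF g] Ztau_add Ztau_diff
      by (metis diff_add_cancel subsetD)
    finally show ?thesis .
  qed
qed

lemma Ftau_comp: assumes f: "f \<in> Ftau_set" and g: "g \<in> Ftau_set" shows "f \<circ> g \<in> Ftau_set"
proof -
  obtain B where gB: "good f B" using Ftau_good[OF f] by blast
  obtain C where gC: "good g C" using Ftau_good[OF g] by blast
  have gm: "strict_mono_on {0..1} g" and gc: "continuous_on {0..1} g" using Ftau_setD[OF g] by auto
  define E where "E = C \<union> ({0..1} \<inter> g -` B)"
  have "finite (g -` B)" using Ftau_bij[OF g] goodD(1)[OF gB] by (simp add: bij_def finite_vimageI)
  then have finE: "finite E" unfolding E_def using goodD(1)[OF gC] by auto
  have EZ: "E \<subseteq> Ztau \<inter> {0..1}"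
  proof
    fix x assume "x \<in> E"
    then show "x \<in> Ztau \<inter> {0..1}"
    proof (cases "x \<in> C")
      case True then show ?thesis using goodD(2,3)[OF gC] by auto
    next
      case False
      then have x: "x \<in> {0..1}" "g x \<in> B" using \<open>x \<in> E\<close> unfolding E_def by auto
      then have "g x \<in> Ztau" using goodD(2)[OF gB] by auto
      then show ?thesis using good_Ztau[OF gC Ftau_01(1)[OF g] x(1)] x by auto
    qed
  qed
  have "good (f \<circ> g) E"
    unfolding good_def
  proof (intro conjI allI impI)
    show "finite E" by fact
    show "E \<subseteq> Ztau \<inter> {0..1}" by fact
    show "0 \<in> E" "1 \<in> E" unfolding E_def using goodD(4,5)[OF gC] by auto
    fix a b :: real assume ab: "0 \<le> a \<and> a < b \<and> b \<le> 1 \<and> (\<forall>y\<in>E. y \<le> a \<or> b \<le> y)"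
    have "\<forall>y\<in>C. y \<le> a \<or> b \<le> y" using ab unfolding E_def by auto
    then obtain k c where kc: "\<forall>x\<in>{a..b}. g x = tau powi k * x + c" using goodD(6)[OF gC] ab by blast
    have a01: "a \<in> {0..1}" and b01: "b \<in> {0..1}" using ab by auto
    have gab: "g a < g b" using smono_less_iff[OF gm a01 b01] ab by auto
    have ga0: "0 \<le> g a" and gb1: "g b \<le> 1" using Ftau_maps[OF g a01] Ftau_maps[OF g b01] by auto
    have "\<forall>y\<in>B. y \<le> g a \<or> g b \<le> y"
    proof (rule ccontr)
      assume "\<not> (\<forall>y\<in>B. y \<le> g a \<or> g b \<le> y)"
      then obtain y where y: "y \<in> B" "g a < y" "y < g b" by force
      have "continuous_on {a..b} g" by (rule continuous_on_subset[OF gc]) (use ab in auto)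
      then obtain x where x: "x \<in> {a..b}" "g x = y" using IVT'[of g a y b] y ab by auto
      have "x \<noteq> a" "x \<noteq> b" using x y by auto
      then have "x \<in> E" "a < x" "x < b" using x y ab unfolding E_def by auto
      then show False using ab by force
    qed
    then obtain l c' where lc: "\<forall>x\<in>{g a..g b}. f x = tau powi l * x + c'"
      using goodD(6)[OF gB ga0 gab gb1] by blast
    show "\<exists>k c. \<forall>x\<in>{a..b}. (f \<circ> g) x = tau powi k * x + c"
    proof (intro exI ballI)
      fix x assume x: "x \<in> {a..b}"
      then have x01: "x \<in> {0..1}" using ab by auto
      have "g x \<in> {g a..g b}" using smono_le_iff[OF gm a01 x01] smono_le_iff[OF gm x01 b01] x by auto
      then have "(f \<circ> g) x = tau powi l * (tau powi k * x + c) + c'" using lc kc x by simp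
      also have "\<dots> = tau powi (l + k) * x + (tau powi l * c + c')"
        by (simp add: power_int_add algebra_simps)
      finally show "(f \<circ> g) x = tau powi (l + k) * x + (tau powi l * c + c')" .
    qed
  qed
  moreover have "fixo {0..1} (f \<circ> g)" using Ftau_setD(1)[OF f] Ftau_setD(1)[OF g] unfolding fixo_def by auto
  moreover have "(f \<circ> g) 0 = 0" "(f \<circ> g) 1 = 1" using Ftau_01[OF f] Ftau_01[OF g] by auto
  ultimately show ?thesis using Ftau_intro by blast
qed

definition finv :: "(real \<Rightarrow> real) \<Rightarrow> real \<Rightarrow> real" where "finv f = inv_into UNIV f"

lemma Ftau_inv_eqs: assumes "f \<in> Ftau_set" shows "f (finv f y) = y" "finv f (f y) = y"
  using Ftau_bij[OF assms] unfolding finv_def by (auto simp: bij_def surj_f_inv_f)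

lemma Ftau_inv: assumes f: "f \<in> Ftau_set" shows "finv f \<in> Ftau_set"
proof -
  define h where "h = finv f"
  have fh: "f (h y) = y" "h (f y) = y" for y unfolding h_def using Ftau_inv_eqs[OF f] by auto
  have fm: "strict_mono_on {0..1} f" using Ftau_setD[OF f] by auto
  have fx: "fixo {0..1} f" using Ftau_setD[OF f] by auto
  have hx: "fixo {0..1} h" unfolding fixo_def
  proof (intro allI impI)
    fix x :: real assume "x \<notin> {0..1}"
    then have "f x = x" using fx unfolding fixo_def by auto
    then show "h x = x" using fh(2)[of x] by simp
  qed
  have h01: "h y \<in> {0..1}" if "y \<in> {0..1}" for y
  proof (rule ccontr)
    assume "h y \<notin> {0..1}"
    then have "f (h y) = h y" using fx unfolding fixo_def by auto
    then show False using fh(1)[of y] that \<open>h y \<notin> {0..1}\<close> by auto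
  qed
  have hl: "(h x < h y) = (x < y)" if "x \<in> {0..1}" "y \<in> {0..1}" for x y
    using smono_less_iff[OF fm h01[OF that(1)] h01[OF that(2)]] fh by simp
  have hle: "(h x \<le> h y) = (x \<le> y)" if "x \<in> {0..1}" "y \<in> {0..1}" for x y
    using smono_le_iff[OF fm h01[OF that(1)] h01[OF that(2)]] fh by simp
  obtain C where gC: "good f C" using Ftau_good[OF f] by blast
  have f0: "f 0 = 0" "f 1 = 1" using Ftau_01[OF f] by auto
  have "good h (f ` C)"
    unfolding good_def
  proof (intro conjI allI impI)
    show "finite (f ` C)" using goodD(1)[OF gC] by simp
    show "f ` C \<subseteq> Ztau \<inter> {0..1}"
    proof
      fix y assume "y \<in> f ` C"
      then obtain x where x: "x \<in> C" "y = f x" by auto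
      then have x01: "x \<in> {0..1}" "x \<in> Ztau" using goodD(2,3)[OF gC] by auto
      show "y \<in> Ztau \<inter> {0..1}" using good_Ztau[OF gC f0(1) x01(1)] x01 Ftau_maps[OF f x01(1)] x by auto
    qed
    show "0 \<in> f ` C" "1 \<in> f ` C" using goodD(4,5)[OF gC] f0 by (metis imageI)+
    fix a b :: real assume ab: "0 \<le> a \<and> a < b \<and> b \<le> 1 \<and> (\<forall>y\<in>f ` C. y \<le> a \<or> b \<le> y)"
    have a01: "a \<in> {0..1}" and b01: "b \<in> {0..1}" using ab by auto
    have hab: "h a < h b" using hl[OF a01 b01] ab by auto
    have "\<forall>y\<in>C. y \<le> h a \<or> h b \<le> y"
    proof (rule ccontr)
      assume "\<not> (\<forall>y\<in>C. y \<le> h a \<or> h b \<le> y)"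
      then obtain y where y: "y \<in> C" "h a < y" "y < h b" by force
      have y01: "y \<in> {0..1}" using y goodD(3)[OF gC] by auto
      have "a < f y" "f y < b" using smono_less_iff[OF fm h01[OF a01] y01] smono_less_iff[OF fm y01 h01[OF b01]] y fh by auto
      then show False using ab y by force
    qed
    then obtain k c where kc: "\<forall>x\<in>{h a..h b}. f x = tau powi k * x + c"
      using goodD(6)[OF gC _ hab] h01[OF a01] h01[OF b01] by force
    show "\<exists>k c. \<forall>x\<in>{a..b}. h x = tau powi k * x + c"
    proof (intro exI ballI)
      fix y assume y: "y \<in> {a..b}"
      then have y01: "y \<in> {0..1}" using ab by auto
      have "h y \<in> {h a..h b}" using hle[OF a01 y01] hle[OF y01 b01] y by auto
      then have "f (h y) = tau powi k * h y + c" using kc by blast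
      then have e: "y - c = tau powi k * h y" using fh(1)[of y] by simp
      have "tau powi (-k) * tau powi k = 1" by (simp add: power_int_minus power_int_not_zero)
      then have "h y = (tau powi (-k) * tau powi k) * h y" by simp
      also have "\<dots> = tau powi (-k) * (y - c)" using e by (simp add: mult.assoc)
      finally have "h y = tau powi (-k) * (y - c)" .
      then show "h y = tau powi (-k) * y + (- (tau powi (-k) * c))" by (simp add: algebra_simps)
    qed
  qed
  moreover have "h 0 = 0" "h 1 = 1" using fh(2)[of 0] fh(2)[of 1] f0 by simp_all
  ultimately show ?thesis using Ftau_intro hx unfolding h_def by blast
qed

lemma Ftau_id: "id \<in> Ftau_set"
proof (rule Ftau_intro[where B = "{0,1}"])
  show "good id {0, 1}" unfolding good_def
  proof (intro conjI allI impI)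
    fix a b :: real
    show "\<exists>k c. \<forall>x\<in>{a..b}. id x = tau powi k * x + c"
      by (rule exI[of _ 0], rule exI[of _ 0]) simp
  qed (use Ztau_0 Ztau_1 in auto)
qed (auto simp: fixo_def)

lemma Ftau_carrier[simp]: "carrier Ftau = Ftau_set" and Ftau_mult[simp]: "x \<otimes>\<^bsub>Ftau\<^esub> y = x \<circ> y"
  and Ftau_one[simp]: "\<one>\<^bsub>Ftau\<^esub> = id"
  by (auto simp: Ftau_def)

lemma Ftau_group: "group Ftau"
proof (rule groupI)
  show "\<And>x y. x \<in> carrier Ftau \<Longrightarrow> y \<in> carrier Ftau \<Longrightarrow> x \<otimes>\<^bsub>Ftau\<^esub> y \<in> carrier Ftau"
    using Ftau_comp by simp
  show "\<one>\<^bsub>Ftau\<^esub> \<in> carrier Ftau" using Ftau_id by simp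
  show "\<And>x y z. x \<in> carrier Ftau \<Longrightarrow> y \<in> carrier Ftau \<Longrightarrow> z \<in> carrier Ftau \<Longrightarrow>
       x \<otimes>\<^bsub>Ftau\<^esub> y \<otimes>\<^bsub>Ftau\<^esub> z = x \<otimes>\<^bsub>Ftau\<^esub> (y \<otimes>\<^bsub>Ftau\<^esub> z)" by (simp add: o_assoc)
  show "\<And>x. x \<in> carrier Ftau \<Longrightarrow> \<one>\<^bsub>Ftau\<^esub> \<otimes>\<^bsub>Ftau\<^esub> x = x" by simp
  show "\<And>x. x \<in> carrier Ftau \<Longrightarrow> \<exists>y\<in>carrier Ftau. y \<otimes>\<^bsub>Ftau\<^esub> x = \<one>\<^bsub>Ftau\<^esub>"
  proof -
    fix x assume "x \<in> carrier Ftau"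
    then have "finv x \<in> carrier Ftau" "finv x \<circ> x = id" using Ftau_inv Ftau_inv_eqs by (auto simp: fun_eq_iff)
    then show "\<exists>y\<in>carrier Ftau. y \<otimes>\<^bsub>Ftau\<^esub> x = \<one>\<^bsub>Ftau\<^esub>" by auto
  qed
qed

lemma Ftau_m_inv: assumes "f \<in> Ftau_set" shows "inv\<^bsub>Ftau\<^esub> f = finv f"
proof -
  have "finv f \<circ> f = id" using Ftau_inv_eqs[OF assms] by (auto simp: fun_eq_iff)
  then show ?thesis using group.inv_equality[OF Ftau_group, of "finv f" f] assms Ftau_inv by simp
qed


lemma Ftau_strict: assumes "f \<in> Ftau_set" "x \<in> {0..1}" "y \<in> {0..1}" shows "(f x < f y) = (x < y)"
  using smono_less_iff[OF Ftau_setD(4)[OF assms(1)] assms(2,3)] .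
lemma Ftau_le: assumes "f \<in> Ftau_set" "x \<in> {0..1}" "y \<in> {0..1}" shows "(f x \<le> f y) = (x \<le> y)"
  using smono_le_iff[OF Ftau_setD(4)[OF assms(1)] assms(2,3)] .

lemma finv_finv: assumes "f \<in> Ftau_set" shows "finv (finv f) = f"
proof -
  have "finv f \<in> Ftau_set" using Ftau_inv[OF assms] .
  then show ?thesis using Ftau_inv_eqs[OF assms] Ftau_inv_eqs[OF Ftau_inv[OF assms]]
    by (metis ext)
qed

lemma finv_comp: assumes "f \<in> Ftau_set" "g \<in> Ftau_set" shows "finv (f \<circ> g) = finv g \<circ> finv f"
proof -
  have fg: "f \<circ> g \<in> Ftau_set" using Ftau_comp assms by blast
  show ?thesis
  proof
    fix y
    have "(f \<circ> g) ((finv g \<circ> finv f) y) = y" using Ftau_inv_eqs(1)[OF assms(1)] Ftau_inv_eqs(1)[OF assms(2)] by simp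
    then have "finv (f \<circ> g) ((f \<circ> g) ((finv g \<circ> finv f) y)) = finv (f \<circ> g) y" by simp
    then show "finv (f \<circ> g) y = (finv g \<circ> finv f) y" using Ftau_inv_eqs(2)[OF fg] by simp
  qed
qed

lemma finv_id: "finv id = id"
  using Ftau_inv_eqs(2)[OF Ftau_id] by (auto simp: fun_eq_iff)

lemma fixo_mono: "fixo S f \<Longrightarrow> S \<subseteq> T \<Longrightarrow> fixo T f" unfolding fixo_def by auto
lemma fixo_comp: "fixo S f \<Longrightarrow> fixo S g \<Longrightarrow> fixo S (f \<circ> g)" unfolding fixo_def by auto
lemma fixo_id: "fixo S id" unfolding fixo_def by auto
lemma fixo_finv: assumes "f \<in> Ftau_set" "fixo S f" shows "fixo S (finv f)"
  unfolding fixo_def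
proof (intro allI impI)
  fix x assume "x \<notin> S"
  then have "f x = x" using assms(2) unfolding fixo_def by auto
  then show "finv f x = x" using Ftau_inv_eqs(2)[OF assms(1), of x] by simp
qed
lemma fixo_maps: assumes "f \<in> Ftau_set" "fixo S f" "x \<in> S" shows "f x \<in> S"
proof (rule ccontr)
  assume "f x \<notin> S"
  then have "f (f x) = f x" using assms(2) unfolding fixo_def by auto
  then have "f x = x" using Ftau_inv_eqs(2)[OF assms(1)] by metis
  then show False using \<open>f x \<notin> S\<close> assms(3) by simp
qed
lemma fixo_conj: assumes "c \<in> Ftau_set" "fixo S f" shows "fixo (c ` S) (c \<circ> f \<circ> finv c)"
  unfolding fixo_def
proof (intro allI impI)
  fix x assume x: "x \<notin> c ` S"
  have "finv c x \<notin> S"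
  proof
    assume "finv c x \<in> S"
    then have "c (finv c x) \<in> c ` S" by blast
    then show False using x Ftau_inv_eqs(1)[OF assms(1)] by simp
  qed
  then show "(c \<circ> f \<circ> finv c) x = x" using assms(2) Ftau_inv_eqs(1)[OF assms(1)] unfolding fixo_def by simp
qed
lemma fixo_commute: assumes "f \<in> Ftau_set" "g \<in> Ftau_set" "fixo S f" "fixo T g" "S \<inter> T = {}"
  shows "f \<circ> g = g \<circ> f"
proof
  fix x
  show "(f \<circ> g) x = (g \<circ> f) x"
  proof (cases "x \<in> S")
    case True
    then have "x \<notin> T" "f x \<in> S" using assms fixo_maps by auto
    then have "g x = x" "g (f x) = f x" using assms(4,5) unfolding fixo_def by auto
    then show ?thesis by simp
  next
    case False
    then have fx: "f x = x" using assms(3) unfolding fixo_def by auto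
    show ?thesis
    proof (cases "x \<in> T")
      case True
      then have "g x \<in> T" using assms fixo_maps by auto
      then have "f (g x) = g x" using assms(3,5) unfolding fixo_def by auto
      then show ?thesis using fx by simp
    next
      case False
      then show ?thesis using fx assms(4) unfolding fixo_def by simp
    qed
  qed
qed

lemma Ftau_image_interval: assumes "f \<in> Ftau_set" "0 \<le> p" "q \<le> 1"
  shows "f ` {p..q} \<subseteq> {f p..f q}"
proof
  fix y assume "y \<in> f ` {p..q}"
  then obtain x where x: "x \<in> {p..q}" "y = f x" by auto
  then show "y \<in> {f p..f q}" using Ftau_le[OF assms(1), of p x] Ftau_le[OF assms(1), of x q] assms by auto
qed

lemma funpow_Ftau: "f \<in> Ftau_set \<Longrightarrow> f ^^ n \<in> Ftau_set"
  by (induction n) (auto simp: Ftau_id Ftau_comp)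

lemma fixo_funpow: "fixo S f \<Longrightarrow> fixo S (f ^^ n)"
  by (induction n) (auto simp: fixo_id fixo_comp)

lemma funpow_commute: assumes "f \<circ> g = g \<circ> f" shows "(f ^^ n) \<circ> (g ^^ m) = (g ^^ m) \<circ> (f ^^ n)"
proof -
  have a: "f (g x) = g (f x)" for x using assms by (metis comp_apply)
  have 1: "(f ^^ n) (g x) = g ((f ^^ n) x)" for n x
    by (induction n arbitrary: x) (auto simp: a)
  have "(f ^^ n) ((g ^^ m) x) = (g ^^ m) ((f ^^ n) x)" for x
    by (induction m arbitrary: x) (auto simp: 1)
  then show ?thesis by (auto simp: fun_eq_iff)
qed

definition ipow :: "(real \<Rightarrow> real) \<Rightarrow> int \<Rightarrow> real \<Rightarrow> real" where
  "ipow f k = (if 0 \<le> k then f ^^ nat k else finv f ^^ nat (-k))"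

lemma ipow_Ftau: "f \<in> Ftau_set \<Longrightarrow> ipow f k \<in> Ftau_set"
  unfolding ipow_def using funpow_Ftau Ftau_inv by auto

lemma fixo_ipow: "f \<in> Ftau_set \<Longrightarrow> fixo S f \<Longrightarrow> fixo S (ipow f k)"
  unfolding ipow_def using fixo_funpow fixo_finv by auto

lemma ipow_commute: assumes "f \<in> Ftau_set" shows "ipow f k \<circ> ipow f j = ipow f j \<circ> ipow f k"
proof -
  have c0: "f \<circ> finv f = finv f \<circ> f" using Ftau_inv_eqs[OF assms] by (auto simp: fun_eq_iff)
  have cff: "f \<circ> f = f \<circ> f" "finv f \<circ> finv f = finv f \<circ> finv f" by auto
  show ?thesis unfolding ipow_def
    using funpow_commute[OF c0] funpow_commute[OF c0[symmetric]] funpow_commute[OF cff(1)] funpow_commute[OF cff(2)]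
    by auto
qed

definition germ0 :: "(real \<Rightarrow> real) \<Rightarrow> int \<Rightarrow> bool" where
  "germ0 f k \<longleftrightarrow> (\<exists>d>0. \<forall>x\<in>{0..d}. f x = tau powi k * x)"
definition germ1 :: "(real \<Rightarrow> real) \<Rightarrow> int \<Rightarrow> bool" where
  "germ1 f k \<longleftrightarrow> (\<exists>d>0. \<forall>x\<in>{1-d..1}. f x = 1 - tau powi k * (1 - x))"

lemma tau_powi_pos: "tau powi k > 0" using tau_pos by simp

lemma tau_cancel: "tau powi k * (tau powi (-k) * z) = z" "tau powi (-k) * (tau powi k * z) = z"
  by (simp_all add: power_int_minus power_int_not_zero mult.assoc[symmetric])

lemma germ0_comp: assumes "germ0 f k" "germ0 g j" shows "germ0 (f \<circ> g) (k + j)"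
proof -
  obtain d1 where d1: "d1 > 0" "\<forall>x\<in>{0..d1}. f x = tau powi k * x" using assms(1) unfolding germ0_def by auto
  obtain d2 where d2: "d2 > 0" "\<forall>x\<in>{0..d2}. g x = tau powi j * x" using assms(2) unfolding germ0_def by auto
  define d where "d = min d2 (d1 * tau powi (-j))"
  have dpos: "d > 0" unfolding d_def using d1 d2 tau_powi_pos by simp
  have "\<forall>x\<in>{0..d}. (f \<circ> g) x = tau powi (k + j) * x"
  proof
    fix x assume x: "x \<in> {0..d}"
    then have gx: "g x = tau powi j * x" using d2 unfolding d_def by auto
    have "tau powi j * x \<le> tau powi j * (d1 * tau powi (-j))"
      using x tau_powi_pos[of j] unfolding d_def by (intro mult_left_mono) auto
    also have "\<dots> = d1" by (simp add: power_int_minus power_int_not_zero)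
    finally have "g x \<in> {0..d1}" using gx x tau_powi_pos[of j] by auto
    then have "f (g x) = tau powi k * (tau powi j * x)" using d1 gx by simp
    then show "(f \<circ> g) x = tau powi (k + j) * x" by (simp add: power_int_add)
  qed
  then show ?thesis unfolding germ0_def using dpos by blast
qed

lemma germ1_comp: assumes "germ1 f k" "germ1 g j" shows "germ1 (f \<circ> g) (k + j)"
proof -
  obtain d1 where d1: "d1 > 0" "\<forall>x\<in>{1-d1..1}. f x = 1 - tau powi k * (1 - x)" using assms(1) unfolding germ1_def by auto
  obtain d2 where d2: "d2 > 0" "\<forall>x\<in>{1-d2..1}. g x = 1 - tau powi j * (1 - x)" using assms(2) unfolding germ1_def by auto
  define d where "d = min d2 (d1 * tau powi (-j))"
  have dpos: "d > 0" unfolding d_def using d1 d2 tau_powi_pos by simp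
  have "\<forall>x\<in>{1-d..1}. (f \<circ> g) x = 1 - tau powi (k + j) * (1 - x)"
  proof
    fix x assume x: "x \<in> {1-d..1}"
    then have gx: "g x = 1 - tau powi j * (1 - x)" using d2 unfolding d_def by auto
    have "tau powi j * (1 - x) \<le> tau powi j * (d1 * tau powi (-j))"
      using x tau_powi_pos[of j] unfolding d_def by (intro mult_left_mono) auto
    also have "\<dots> = d1" by (simp add: power_int_minus power_int_not_zero)
    finally have "g x \<in> {1-d1..1}" using gx x tau_powi_pos[of j] by auto
    then have "f (g x) = 1 - tau powi k * (tau powi j * (1 - x))" using d1 gx by simp
    then show "(f \<circ> g) x = 1 - tau powi (k + j) * (1 - x)" by (simp add: power_int_add)
  qed
  then show ?thesis unfolding germ1_def using dpos by blast
qed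

lemma germ0_inv: assumes "f \<in> Ftau_set" "germ0 f k" shows "germ0 (finv f) (-k)"
proof -
  obtain d1 where d1: "d1 > 0" "\<forall>x\<in>{0..d1}. f x = tau powi k * x" using assms(2) unfolding germ0_def by auto
  define d where "d = tau powi k * d1"
  have dpos: "d > 0" unfolding d_def using d1 tau_powi_pos by simp
  have "\<forall>y\<in>{0..d}. finv f y = tau powi (-k) * y"
  proof
    fix y assume y: "y \<in> {0..d}"
    define x where "x = tau powi (-k) * y"
    have "x \<le> tau powi (-k) * d" unfolding x_def using y tau_powi_pos[of "-k"] by (intro mult_left_mono) auto
    also have "\<dots> = d1" unfolding d_def by (simp add: power_int_minus power_int_not_zero)
    finally have "x \<in> {0..d1}" using y tau_powi_pos[of "-k"] unfolding x_def by auto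
    then have "f x = tau powi k * x" using d1 by auto
    also have "\<dots> = y" unfolding x_def by (simp add: tau_cancel)
    finally have "finv f (f x) = finv f y" by simp
    then show "finv f y = tau powi (-k) * y" using Ftau_inv_eqs(2)[OF assms(1)] unfolding x_def by simp
  qed
  then show ?thesis unfolding germ0_def using dpos by blast
qed

lemma germ1_inv: assumes "f \<in> Ftau_set" "germ1 f k" shows "germ1 (finv f) (-k)"
proof -
  obtain d1 where d1: "d1 > 0" "\<forall>x\<in>{1-d1..1}. f x = 1 - tau powi k * (1 - x)" using assms(2) unfolding germ1_def by auto
  define d where "d = tau powi k * d1"
  have dpos: "d > 0" unfolding d_def using d1 tau_powi_pos by simp
  have "\<forall>y\<in>{1-d..1}. finv f y = 1 - tau powi (-k) * (1 - y)"
  proof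
    fix y assume y: "y \<in> {1-d..1}"
    define x where "x = 1 - tau powi (-k) * (1 - y)"
    have "tau powi (-k) * (1 - y) \<le> tau powi (-k) * d" using y tau_powi_pos[of "-k"] by (intro mult_left_mono) auto
    also have "\<dots> = d1" unfolding d_def by (simp add: power_int_minus power_int_not_zero)
    finally have "x \<in> {1-d1..1}" using y tau_powi_pos[of "-k"] unfolding x_def by auto
    then have "f x = 1 - tau powi k * (1 - x)" using d1 by auto
    also have "\<dots> = y" unfolding x_def by (simp add: tau_cancel)
    finally have "finv f (f x) = finv f y" by simp
    then show "finv f y = 1 - tau powi (-k) * (1 - y)" using Ftau_inv_eqs(2)[OF assms(1)] unfolding x_def by simp
  qed
  then show ?thesis unfolding germ1_def using dpos by blast
qed

lemma germ0_id: "germ0 id 0" unfolding germ0_def by (auto intro: exI[of _ 1])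
lemma germ1_id: "germ1 id 0" unfolding germ1_def by (auto intro: exI[of _ 1])

lemma germ0_funpow: "germ0 f k \<Longrightarrow> germ0 (f ^^ n) (int n * k)"
proof (induction n)
  case 0 then show ?case using germ0_id by (simp add: id_def)
next
  case (Suc n)
  then have "germ0 (f \<circ> f ^^ n) (k + int n * k)" using germ0_comp by blast
  then show ?case by (simp add: algebra_simps comp_def)
qed
lemma germ1_funpow: "germ1 f k \<Longrightarrow> germ1 (f ^^ n) (int n * k)"
proof (induction n)
  case 0 then show ?case using germ1_id by (simp add: id_def)
next
  case (Suc n)
  then have "germ1 (f \<circ> f ^^ n) (k + int n * k)" using germ1_comp by blast
  then show ?case by (simp add: algebra_simps comp_def)
qed
lemma germ0_ipow: assumes "f \<in> Ftau_set" "germ0 f k" shows "germ0 (ipow f j) (j * k)"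
proof (cases "0 \<le> j")
  case True
  then show ?thesis unfolding ipow_def using germ0_funpow[OF assms(2), of "nat j"] by simp
next
  case False
  have "germ0 (finv f ^^ nat (-j)) (int (nat (-j)) * (-k))" using germ0_funpow germ0_inv[OF assms] by blast
  then show ?thesis unfolding ipow_def using False by simp
qed
lemma germ1_ipow: assumes "f \<in> Ftau_set" "germ1 f k" shows "germ1 (ipow f j) (j * k)"
proof (cases "0 \<le> j")
  case True
  then show ?thesis unfolding ipow_def using germ1_funpow[OF assms(2), of "nat j"] by simp
next
  case False
  have "germ1 (finv f ^^ nat (-j)) (int (nat (-j)) * (-k))" using germ1_funpow germ1_inv[OF assms] by blast
  then show ?thesis unfolding ipow_def using False by simp
qed

lemma Ftau_germ0: assumes "f \<in> Ftau_set" shows "\<exists>k. germ0 f k"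
proof -
  obtain B where g: "good f B" using Ftau_good[OF assms] by blast
  obtain a b where ab: "a \<in> B" "b \<in> B" "a \<le> 0" "0 < b" "\<forall>y\<in>B. y \<le> a \<or> b \<le> y"
    using piece_right[OF goodD(1,4,5,3)[OF g], of 0] by auto
  have a0: "a = 0" using ab goodD(3)[OF g] by force
  have b1: "b \<le> 1" using ab goodD(3)[OF g] by force
  obtain k c where kc: "\<forall>x\<in>{0..b}. f x = tau powi k * x + c" using goodD(6)[OF g _ ab(4) b1] ab a0 by auto
  have "c = 0" using kc Ftau_01(1)[OF assms] ab by force
  then show ?thesis unfolding germ0_def using kc ab by auto
qed

lemma Ftau_germ1: assumes "f \<in> Ftau_set" shows "\<exists>k. germ1 f k"
proof -
  obtain B where g: "good f B" using Ftau_good[OF assms] by blast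
  obtain a b where ab: "a \<in> B" "b \<in> B" "a < 1" "1 \<le> b" "\<forall>y\<in>B. y \<le> a \<or> b \<le> y"
    using piece_left[OF goodD(1,4,5,3)[OF g], of 1] by auto
  have b1: "b = 1" using ab goodD(3)[OF g] by force
  have a0: "0 \<le> a" using ab goodD(3)[OF g] by force
  obtain k c where kc: "\<forall>x\<in>{a..1}. f x = tau powi k * x + c" using goodD(6)[OF g a0 ab(3)] ab b1 by auto
  have c: "c = 1 - tau powi k" using kc Ftau_01(2)[OF assms] ab by force
  have "\<forall>x\<in>{1-(1-a)..1}. f x = 1 - tau powi k * (1 - x)" using kc c by (auto simp: algebra_simps)
  then show ?thesis unfolding germ1_def using ab(3) by (intro exI[of _ k] exI[of _ "1-a"]) auto
qed

lemma germ_compact: assumes "f \<in> Ftau_set" "germ0 f 0" "germ1 f 0"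
  shows "\<exists>p q. 0 < p \<and> p \<le> q \<and> q < 1 \<and> fixo {p..q} f"
proof -
  obtain d1 where d1: "d1 > 0" "\<forall>x\<in>{0..d1}. f x = x" using assms(2) unfolding germ0_def by auto
  obtain d2 where d2: "d2 > 0" "\<forall>x\<in>{1-d2..1}. f x = x" using assms(3) unfolding germ1_def by auto
  define p where "p = min d1 (1/2)"
  define q where "q = max (1 - d2) (1/2)"
  have "fixo {p..q} f" unfolding fixo_def
  proof (intro allI impI)
    fix x assume "x \<notin> {p..q}"
    then consider "x < 0" | "x > 1" | "0 \<le> x" "x < p" | "q < x" "x \<le> 1" by force
    then show "f x = x"
    proof cases
      case 1 then show ?thesis using Ftau_setD(1)[OF assms(1)] unfolding fixo_def by auto
    next
      case 2 then show ?thesis using Ftau_setD(1)[OF assms(1)] unfolding fixo_def by auto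
    next
      case 3 then show ?thesis using d1 unfolding p_def by auto
    next
      case 4 then show ?thesis using d2 unfolding q_def by auto
    qed
  qed
  moreover have "0 < p" "p \<le> q" "q < 1" using d1 d2 unfolding p_def q_def by auto
  ultimately show ?thesis by blast
qed


definition Tm :: "real \<Rightarrow> real \<Rightarrow> real \<Rightarrow> real" where
  "Tm a b x = (if x < a \<or> b < x then x else if x \<le> a + tau * (b - a) then a + tau * (x - a)
     else a + tau * tau * (b - a) + (1 + tau) * (x - a - tau * (b - a)))"

lemma tau_facts: "0 < tau" "tau < 1" "tau * tau = 1 - tau" "(1 + tau) * (tau * tau) = tau"
  using tau_pos tau_less1 tau_sq by (auto simp: algebra_simps)

lemma Tm_m: assumes "a < b" shows "a < a + tau * (b - a)" "a + tau * (b - a) < b"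
proof -
  show "a < a + tau * (b - a)" using assms tau_pos by simp
  have "tau * (b - a) < 1 * (b - a)" using assms tau_less1 by (intro mult_strict_right_mono) auto
  then show "a + tau * (b - a) < b" by simp
qed

lemma Tm_R0: assumes "x \<le> a" "a < b" shows "Tm a b x = x"
proof (cases "x < a")
  case True then show ?thesis by (simp add: Tm_def)
next
  case False
  then have "x = a" using assms by simp
  moreover have "0 \<le> tau * (b - a)" using tau_pos assms by simp
  ultimately show ?thesis using assms by (simp add: Tm_def)
qed
lemma Tm_R1: assumes "a \<le> x" "x \<le> a + tau * (b - a)" "a < b" shows "Tm a b x = a + tau * (x - a)"
  using Tm_m[OF assms(3)] assms unfolding Tm_def by auto
lemma Tm_R2: assumes "a + tau * (b - a) \<le> x" "x \<le> b" "a < b"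
  shows "Tm a b x = a + tau * tau * (b - a) + (1 + tau) * (x - a - tau * (b - a))"
proof (cases "x = a + tau * (b - a)")
  case True
  have "Tm a b x = a + tau * (x - a)" using Tm_R1[of a x b] True assms Tm_m[OF assms(3)] by auto
  also have "\<dots> = a + tau * tau * (b - a) + (1 + tau) * (x - a - tau * (b - a))"
    unfolding True by (simp add: algebra_simps)
  finally show ?thesis .
next
  case False
  then show ?thesis unfolding Tm_def using assms Tm_m[OF assms(3)] by auto
qed
lemma Tm_R3: assumes "b \<le> x" "a < b" shows "Tm a b x = x"
proof (cases "x = b")
  case True
  have m: "a + tau * (b - a) < b" using Tm_m[OF assms(2)] by simp
  have "Tm a b b = a + tau * tau * (b - a) + (1 + tau) * (b - a - tau * (b - a))"
    using Tm_R2[of a b b] m assms by auto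
  also have "\<dots> = a + (b - a) * (tau * tau + (1 + tau) * (1 - tau))" by (simp add: algebra_simps)
  also have "\<dots> = b" using tau_facts by (simp add: algebra_simps)
  finally show ?thesis using True by simp
next
  case False
  then show ?thesis unfolding Tm_def using assms by auto
qed

lemma tau_powi_m1: "tau powi (-1) = 1 + tau" using tau_inv by simp

lemma Tm_Ftau: assumes Z: "a \<in> Ztau" "b \<in> Ztau" and ab: "0 \<le> a" "a < b" "b \<le> 1"
  shows "Tm a b \<in> Ftau_set"
proof -
  define m where "m = a + tau * (b - a)"
  have m: "a < m" "m < b" using Tm_m[OF ab(2)] unfolding m_def by auto
  have mZ: "m \<in> Ztau" unfolding m_def by (rule Ztau_add[OF Z(1) Ztau_mult[OF Ztau_tau Ztau_diff[OF Z(2) Z(1)]]])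
  show ?thesis
  proof (rule Ftau_intro[where B = "{0, a, m, b, 1}"])
    show "fixo {0..1} (Tm a b)" unfolding fixo_def
    proof (intro allI impI)
      fix x :: real assume "x \<notin> {0..1}"
      then have "x < 0 \<or> x > 1" by auto
      then show "Tm a b x = x" using Tm_R0[of x a b] Tm_R3[of b x a] ab by force
    qed
    show "Tm a b 0 = 0" using Tm_R0[of 0 a b] Tm_R1[of a 0 b] ab m unfolding m_def by (cases "a = 0") auto
    show "Tm a b 1 = 1" using Tm_R3[of b 1 a] ab by auto
    show "good (Tm a b) {0, a, m, b, 1}" unfolding good_def
    proof (intro conjI allI impI)
      show "finite {0, a, m, b, 1}" by simp
      show "{0, a, m, b, 1} \<subseteq> Ztau \<inter> {0..1}" using Z mZ Ztau_0 Ztau_1 ab m by auto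
      show "0 \<in> {0, a, m, b, 1}" "1 \<in> {0, a, m, b, 1}" by auto
      fix c d :: real assume cd: "0 \<le> c \<and> c < d \<and> d \<le> 1 \<and> (\<forall>y\<in>{0, a, m, b, 1}. y \<le> c \<or> d \<le> y)"
      then have ca: "a \<le> c \<or> d \<le> a" and cm: "m \<le> c \<or> d \<le> m" and cb: "b \<le> c \<or> d \<le> b" by auto
      consider "d \<le> a" | "a \<le> c" "d \<le> m" | "m \<le> c" "d \<le> b" | "b \<le> c" using ca cm cb cd m by force
      then show "\<exists>k c'. \<forall>x\<in>{c..d}. Tm a b x = tau powi k * x + c'"
      proof cases
        case 1
        then show ?thesis using Tm_R0[of _ a b] ab by (intro exI[of _ 0] exI[of _ 0]) auto
      next
        case 2
        then show ?thesis using Tm_R1[of a _ b] ab unfolding m_def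
          by (intro exI[of _ 1] exI[of _ "a - tau * a"]) (auto simp: algebra_simps)
      next
        case 3
        show ?thesis
        proof (intro exI[of _ "-1::int"] exI[of _ "a + tau * tau * (b - a) - (1 + tau) * (a + tau * (b - a))"] ballI)
          fix x assume x: "x \<in> {c..d}"
          then have "Tm a b x = a + tau * tau * (b - a) + (1 + tau) * (x - a - tau * (b - a))"
            using Tm_R2[of a b x] 3 ab unfolding m_def by auto
          also have "\<dots> = (1 + tau) * x + (a + tau * tau * (b - a) - (1 + tau) * (a + tau * (b - a)))"
            by (simp add: algebra_simps)
          finally show "Tm a b x = tau powi (-1) * x + (a + tau * tau * (b - a) - (1 + tau) * (a + tau * (b - a)))"
            using tau_powi_m1 by simp
        qed
      next
        case 4
        then show ?thesis using Tm_R3[of b _ a] ab by (intro exI[of _ 0] exI[of _ 0]) auto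
      qed
    qed
  qed
qed

lemma Tm_fixo: "a < b \<Longrightarrow> fixo {a<..<b} (Tm a b)"
  unfolding fixo_def using Tm_R0 Tm_R3 by (metis greaterThanLessThan_iff not_le)

lemma tau3: "tau * (tau * (tau * z)) = tau * z - tau * (tau * z)"
proof -
  have "tau * (tau * (tau * z)) = tau * ((tau * tau) * z)" by (simp add: mult.assoc)
  also have "\<dots> = tau * ((1 - tau) * z)" using tau_sq by simp
  finally show ?thesis by (simp add: algebra_simps)
qed

lemma Tm_less: assumes "a < x" "x < b" shows "Tm a b x < x"
proof -
  have ab: "a < b" using assms by simp
  define m where "m = a + tau * (b - a)"
  show ?thesis
  proof (cases "x \<le> m")
    case True
    then have "Tm a b x = a + tau * (x - a)" using Tm_R1[of a x b] assms ab unfolding m_def by auto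
    moreover have "tau * (x - a) < x - a" using assms tau_facts by simp
    ultimately show ?thesis by simp
  next
    case False
    then have "Tm a b x = a + tau * tau * (b - a) + (1 + tau) * (x - m)" using Tm_R2[of a b x] assms ab unfolding m_def by auto
    also have "\<dots> = x + tau * ((x - m) - tau * tau * (b - a))"
      unfolding m_def by (simp add: algebra_simps tau3)
    also have "\<dots> < x"
    proof -
      have "tau * (b - a) + tau * tau * (b - a) = (tau + tau * tau) * (b - a)" by (simp add: algebra_simps)
      also have "\<dots> = b - a" using tau_sq by simp
      finally have "x - m < tau * tau * (b - a)" using assms unfolding m_def by linarith
      then show ?thesis using tau_facts by (simp add: mult_pos_neg)
    qed
    finally show ?thesis .
  qed
qed

lemma Tm_germ0_left: assumes "0 < b" shows "germ0 (Tm 0 b) 1"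
  unfolding germ0_def
proof (intro exI[of _ "tau * b"] conjI ballI)
  show "0 < tau * b" using assms tau_facts by simp
  fix x assume "x \<in> {0..tau * b}"
  then show "Tm 0 b x = tau powi 1 * x" using Tm_R1[of 0 x b] assms by auto
qed

lemma Tm_germ0_id: assumes "0 < a" "a < b" shows "germ0 (Tm a b) 0"
  unfolding germ0_def using assms Tm_R0[of _ a b] by (intro exI[of _ a]) auto

lemma Tm_germ1_id: assumes "a < b" "b < 1" shows "germ1 (Tm a b) 0"
  unfolding germ1_def using assms Tm_R3[of b _ a] by (intro exI[of _ "1 - b"]) auto

lemma Tm_germ1_right: assumes "a < 1" shows "germ1 (Tm a 1) (-1)"
  unfolding germ1_def
proof (intro exI[of _ "1 - (a + tau * (1 - a))"] conjI ballI)
  show "0 < 1 - (a + tau * (1 - a))" using Tm_m[OF assms] by simp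
  fix x assume x: "x \<in> {1 - (1 - (a + tau * (1 - a)))..1}"
  then have "Tm a 1 x = a + tau * tau * (1 - a) + (1 + tau) * (x - a - tau * (1 - a))"
    using Tm_R2[of a 1 x] assms by auto
  also have "\<dots> = 1 - (1 + tau) * (1 - x) + (1 - a) * (tau * tau + (1 + tau) * (1 - tau) - 1)"
    by (simp add: algebra_simps)
  also have "\<dots> = 1 - (1 + tau) * (1 - x)" using tau_facts by (simp add: algebra_simps)
  finally show "Tm a 1 x = 1 - tau powi (- 1) * (1 - x)" using tau_powi_m1 by simp
qed

lemma push_left:
  assumes f: "f \<in> Ftau_set" and fx: "fixo {a<..<b} f" and lt: "\<And>x. a < x \<Longrightarrow> x < b \<Longrightarrow> f x < x"
    and ab: "0 \<le> a" "a < w" "w < b" "b \<le> 1" and eta: "\<eta> > 0"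
  shows "\<exists>n. (f ^^ n) w < a + \<eta>"
proof -
  define s where "s n = (f ^^ n) w" for n
  have fa: "f a = a" using fx unfolding fixo_def by auto
  have sin: "s n \<in> {a<..<b}" for n
    unfolding s_def using fixo_maps[OF funpow_Ftau[OF f] fixo_funpow[OF fx]] ab by auto
  have sSuc: "s (Suc n) = f (s n)" for n unfolding s_def by simp
  have dec: "decseq s" unfolding decseq_Suc_iff using sSuc lt sin by (auto intro: less_imp_le)
  obtain L where L: "s \<longlonglongrightarrow> L" "\<forall>i. L \<le> s i" using decseq_convergent[OF dec, of a] sin
    by (metis greaterThanLessThan_iff less_imp_le)
  have La: "a \<le> L" using L(1) sin by (intro LIMSEQ_le_const) (auto intro: less_imp_le)
  have Lw: "L \<le> w" using L(2)[rule_format, of 0] unfolding s_def by simp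
  have L01: "L \<in> {0..1}" using La Lw ab by auto
  have "(\<lambda>n. f (s n)) \<longlonglongrightarrow> f L"
  proof -
    have s01: "s n \<in> {0..1}" for n using sin[of n] ab by auto
    have ev: "\<forall>\<^sub>F n in sequentially. s n \<in> {0..1}" using s01 by (intro always_eventually) auto
    show ?thesis using continuous_on_tendsto_compose[OF Ftau_setD(3)[OF f] L(1) L01 ev] .
  qed
  moreover have "(\<lambda>n. f (s n)) \<longlonglongrightarrow> L" using L(1) unfolding sSuc[symmetric] by (rule LIMSEQ_Suc)
  ultimately have "f L = L" using LIMSEQ_unique by blast
  then have "L = a" using lt[of L] La Lw ab by force
  then have "\<forall>\<^sub>F n in sequentially. s n < a + \<eta>" using L(1) eta by (intro order_tendstoD) auto
  then show ?thesis unfolding s_def by (meson eventually_sequentially order_refl)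
qed

lemma push_right:
  assumes f: "f \<in> Ftau_set" and fx: "fixo {a<..<b} f" and gt: "\<And>x. a < x \<Longrightarrow> x < b \<Longrightarrow> x < f x"
    and ab: "0 \<le> a" "a < w" "w < b" "b \<le> 1" and eta: "\<eta> > 0"
  shows "\<exists>n. b - \<eta> < (f ^^ n) w"
proof -
  define s where "s n = (f ^^ n) w" for n
  have fb: "f b = b" using fx unfolding fixo_def by auto
  have sin: "s n \<in> {a<..<b}" for n
    unfolding s_def using fixo_maps[OF funpow_Ftau[OF f] fixo_funpow[OF fx]] ab by auto
  have sSuc: "s (Suc n) = f (s n)" for n unfolding s_def by simp
  have inc: "incseq s" unfolding incseq_Suc_iff using sSuc gt sin by (auto intro: less_imp_le)
  obtain L where L: "s \<longlonglongrightarrow> L" "\<forall>i. s i \<le> L" using incseq_convergent[OF inc, of b] sin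
    by (metis greaterThanLessThan_iff less_imp_le)
  have Lb: "L \<le> b" using L(1) sin by (intro LIMSEQ_le_const2) (auto intro: less_imp_le)
  have Lw: "w \<le> L" using L(2)[rule_format, of 0] unfolding s_def by simp
  have L01: "L \<in> {0..1}" using Lb Lw ab by auto
  have "(\<lambda>n. f (s n)) \<longlonglongrightarrow> f L"
  proof -
    have s01: "s n \<in> {0..1}" for n using sin[of n] ab by auto
    have ev: "\<forall>\<^sub>F n in sequentially. s n \<in> {0..1}" using s01 by (intro always_eventually) auto
    show ?thesis using continuous_on_tendsto_compose[OF Ftau_setD(3)[OF f] L(1) L01 ev] .
  qed
  moreover have "(\<lambda>n. f (s n)) \<longlonglongrightarrow> L" using L(1) unfolding sSuc[symmetric] by (rule LIMSEQ_Suc)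
  ultimately have "f L = L" using LIMSEQ_unique by blast
  then have "L = b" using gt[of L] Lb Lw ab by force
  then have "\<forall>\<^sub>F n in sequentially. b - \<eta> < s n" using L(1) eta by (intro order_tendstoD) auto
  then show ?thesis unfolding s_def by (meson eventually_sequentially order_refl)
qed

lemma Tm_inv_gt: assumes "a < x" "x < b" "Tm a b \<in> Ftau_set" shows "x < finv (Tm a b) x"
proof -
  have ab: "a < b" using assms by simp
  have "finv (Tm a b) x \<in> {a<..<b}"
    using fixo_maps[OF Ftau_inv[OF assms(3)] fixo_finv[OF assms(3) Tm_fixo[OF ab]]] assms by auto
  then have "Tm a b (finv (Tm a b) x) < finv (Tm a b) x" using Tm_less by auto
  then show ?thesis using Ftau_inv_eqs(1)[OF assms(3)] by simp
qed


definition comm :: "(real \<Rightarrow> real) \<Rightarrow> (real \<Rightarrow> real) \<Rightarrow> real \<Rightarrow> real" where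
  "comm f g = f \<circ> g \<circ> finv f \<circ> finv g"

lemma comm_apply: "comm f g x = f (g (finv f (finv g x)))" unfolding comm_def by simp

lemma comm_Ftau: "f \<in> Ftau_set \<Longrightarrow> g \<in> Ftau_set \<Longrightarrow> comm f g \<in> Ftau_set"
  unfolding comm_def using Ftau_comp Ftau_inv by simp

abbreviation DD where "DD \<equiv> derived Ftau Ftau_set"

lemma DD_subgroup: "subgroup DD Ftau"
  using group.derived_is_subgroup[OF Ftau_group, of Ftau_set] by simp

lemma DD_sub: "DD \<subseteq> Ftau_set" using subgroup.subset[OF DD_subgroup] by simp

lemma DD_comp: "x \<in> DD \<Longrightarrow> y \<in> DD \<Longrightarrow> x \<circ> y \<in> DD"
  using subgroup.m_closed[OF DD_subgroup] by simp

lemma DD_finv: assumes "x \<in> DD" shows "finv x \<in> DD"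
proof -
  have "inv\<^bsub>Ftau\<^esub> x \<in> DD" using subgroup.m_inv_closed[OF DD_subgroup assms] .
  moreover have "inv\<^bsub>Ftau\<^esub> x = finv x" using Ftau_m_inv DD_sub assms by auto
  ultimately show ?thesis by simp
qed

lemma comm_DD: assumes "f \<in> Ftau_set" "g \<in> Ftau_set" shows "comm f g \<in> DD"
proof -
  have "f \<otimes>\<^bsub>Ftau\<^esub> g \<otimes>\<^bsub>Ftau\<^esub> inv\<^bsub>Ftau\<^esub> f \<otimes>\<^bsub>Ftau\<^esub> inv\<^bsub>Ftau\<^esub> g \<in> derived_set Ftau Ftau_set"
    using assms by auto
  then have "f \<otimes>\<^bsub>Ftau\<^esub> g \<otimes>\<^bsub>Ftau\<^esub> inv\<^bsub>Ftau\<^esub> f \<otimes>\<^bsub>Ftau\<^esub> inv\<^bsub>Ftau\<^esub> g \<in> DD"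
    unfolding derived_def by (rule generate.incl)
  then show ?thesis using assms by (simp add: Ftau_m_inv comm_def)
qed

lemma Ftau_open01: assumes "f \<in> Ftau_set" "0 < x" "x < 1" shows "0 < f x" "f x < 1"
  using Ftau_strict[OF assms(1), of 0 x] Ftau_strict[OF assms(1), of x 1] Ftau_01[OF assms(1)] assms by auto

lemma T_Ftau: "Tm 0 1 \<in> Ftau_set" using Tm_Ftau[of 0 1] Ztau_0 Ztau_1 by simp

lemma push_T: assumes "0 < w" "w < 1" "0 < p" shows "\<exists>n. (Tm 0 1 ^^ n) w < p"
  using push_left[OF T_Ftau Tm_fixo[of 0 1] Tm_less, of w p] assms by auto

lemma push_Tinv: assumes "0 < w" "w < 1" "q < 1" shows "\<exists>n. q < (finv (Tm 0 1) ^^ n) w"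
proof -
  have "\<exists>n. 1 - (1 - q) < (finv (Tm 0 1) ^^ n) w"
    using push_right[OF Ftau_inv[OF T_Ftau] fixo_finv[OF T_Ftau Tm_fixo[of 0 1]], of w "1 - q"]
      Tm_inv_gt[OF _ _ T_Ftau] assms by auto
  then show ?thesis by simp
qed

lemma fixo_T_pow: "fixo {0<..<1} (Tm 0 1 ^^ n)" "fixo {0<..<1} (finv (Tm 0 1) ^^ n)"
  using fixo_funpow[OF Tm_fixo[of 0 1]] fixo_funpow[OF fixo_finv[OF T_Ftau Tm_fixo[of 0 1]]] by auto

lemma stepA: assumes g: "g \<in> Ftau_set" and x0: "g x0 \<noteq> x0"
  shows "\<exists>c \<delta>. \<delta> > 0 \<and> 0 < c - \<delta> \<and> c + \<delta> < 1 \<and> (\<forall>t\<in>{c-\<delta><..<c+\<delta>}. g t \<notin> {c-\<delta><..<c+\<delta>})"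
proof -
  have x01: "0 < x0" "x0 < 1"
  proof -
    have "x0 \<in> {0..1}" using x0 Ftau_setD(1)[OF g] unfolding fixo_def by auto
    moreover have "x0 \<noteq> 0" "x0 \<noteq> 1" using x0 Ftau_01[OF g] by auto
    ultimately show "0 < x0" "x0 < 1" by auto
  qed
  define e where "e = \<bar>g x0 - x0\<bar>"
  have epos: "e > 0" unfolding e_def using x0 by simp
  obtain d where d: "d > 0" "\<forall>t\<in>{0..1}. dist t x0 < d \<longrightarrow> dist (g t) (g x0) < e / 3"
    using Ftau_setD(3)[OF g] x01 epos unfolding continuous_on_iff
    by (metis atLeastAtMost_iff divide_pos_pos less_imp_le zero_less_numeral)
  define \<delta> where "\<delta> = min d (min (e / 3) (min (x0 / 2) ((1 - x0) / 2)))"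
  have dpos: "\<delta> > 0" unfolding \<delta>_def using d epos x01 by auto
  have dle: "\<delta> \<le> d" "\<delta> \<le> e / 3" "\<delta> \<le> x0 / 2" "\<delta> \<le> (1 - x0) / 2" unfolding \<delta>_def by (simp_all only: min.cobounded1 min.coboundedI2)
  have "\<forall>t\<in>{x0-\<delta><..<x0+\<delta>}. g t \<notin> {x0-\<delta><..<x0+\<delta>}"
  proof
    fix t assume t: "t \<in> {x0-\<delta><..<x0+\<delta>}"
    then have t01: "t \<in> {0..1}" using x01 dle by auto
    have "dist t x0 < d" using t dle unfolding dist_real_def by auto
    then have "\<bar>g t - g x0\<bar> < e / 3" using d t01 unfolding dist_real_def by auto
    moreover have tri: "e \<le> \<bar>g t - x0\<bar> + \<bar>g t - g x0\<bar>" unfolding e_def by (smt (verit))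
    ultimately have "\<bar>g t - x0\<bar> > \<delta>" using dle(2) dpos by linarith
    then show "g t \<notin> {x0-\<delta><..<x0+\<delta>}" by auto
  qed
  moreover have "0 < x0 - \<delta>" "x0 + \<delta> < 1" using x01 dle dpos by auto
  ultimately show ?thesis using dpos by blast
qed

lemma compress:
  assumes J: "\<delta> > 0" "0 < x0 - \<delta>" "x0 + \<delta> < 1" and pq: "0 < p" "p \<le> q" "q < 1"
  shows "\<exists>d\<in>DD. \<forall>t\<in>{p..q}. d t \<in> {x0-\<delta><..<x0+\<delta>}"
proof -
  obtain a where a: "a \<in> Ztau" "0 < a" "a < min p (x0 - \<delta>)" using Ztau_dense[of 0 "min p (x0 - \<delta>)"] J pq by auto
  obtain w where w: "w \<in> Ztau" "max q (x0 + \<delta>) < w" "w < 1" using Ztau_dense[of "max q (x0 + \<delta>)" 1] J pq by auto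
  obtain w' where w': "w' \<in> Ztau" "x0 < w'" "w' < x0 + \<delta>" using Ztau_dense[of x0 "x0 + \<delta>"] J by auto
  have aw: "a < w" "a < q" "q < w" "a < w'" "w' < w" "a < x0" using a w w' pq J by auto
  define c1 where "c1 = Tm a w"
  have c1: "c1 \<in> Ftau_set" unfolding c1_def using Tm_Ftau[of a w] a w aw by auto
  have c1fx: "fixo {a<..<w} c1" unfolding c1_def using Tm_fixo aw by auto
  obtain n where n: "(c1 ^^ n) q < a + (x0 - a)"
    using push_left[OF c1 c1fx _ _ _ _ _, of q "x0 - a"] Tm_less a w aw pq J unfolding c1_def by force
  define c1n where "c1n = c1 ^^ n"
  have c1n: "c1n \<in> Ftau_set" unfolding c1n_def using funpow_Ftau[OF c1] .
  have c1nfx: "fixo {a<..<w} c1n" unfolding c1n_def using fixo_funpow[OF c1fx] .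
  have c1nq: "c1n q < x0" using n unfolding c1n_def by simp
  have c1np: "a < c1n p" using fixo_maps[OF c1n c1nfx, of p] a w aw pq by auto
  have c1n_rng: "c1n t \<in> {c1n p..c1n q}" if "t \<in> {p..q}" for t
    using Ftau_le[OF c1n, of p t] Ftau_le[OF c1n, of t q] that pq by auto
  define c2 where "c2 = finv (Tm a w')"
  have Tw': "Tm a w' \<in> Ftau_set" using Tm_Ftau[of a w'] a w' aw w J by auto
  have c2: "c2 \<in> Ftau_set" unfolding c2_def using Ftau_inv[OF Tw'] .
  have c2fx: "fixo {a<..<w'} c2" unfolding c2_def using fixo_finv[OF Tw' Tm_fixo] aw by auto
  have c2gt: "\<And>x. a < x \<Longrightarrow> x < w' \<Longrightarrow> x < c2 x" unfolding c2_def using Tm_inv_gt[OF _ _ Tw'] by auto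
  have "c1n p \<le> c1n q" using c1n_rng[of p] pq by auto
  then obtain m where m: "w' - (w' - (x0 - \<delta>)) < (c2 ^^ m) (c1n p)"
    using push_right[OF c2 c2fx c2gt, of "c1n p" "w' - (x0 - \<delta>)"] a c1np c1nq w' J by force
  define c2m where "c2m = c2 ^^ m"
  have c2m: "c2m \<in> Ftau_set" unfolding c2m_def using funpow_Ftau[OF c2] .
  have c2mfx: "fixo {a<..<w'} c2m" unfolding c2m_def using fixo_funpow[OF c2fx] .
  define c where "c = c2m \<circ> c1n"
  have c: "c \<in> Ftau_set" unfolding c_def using Ftau_comp c2m c1n by blast
  have s1: "{a<..<w'} \<subseteq> {a..w}" "{a<..<w} \<subseteq> {a..w}" using aw by auto
  have cfx: "fixo {a..w} c" unfolding c_def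
    using fixo_comp[OF fixo_mono[OF c2mfx s1(1)] fixo_mono[OF c1nfx s1(2)]] .
  have cJ: "c t \<in> {x0-\<delta><..<x0+\<delta>}" if t: "t \<in> {p..q}" for t
  proof -
    have r: "c1n t \<in> {c1n p..c1n q}" using c1n_rng[OF t] .
    then have r': "c1n t \<in> {a<..<w'}" using c1np c1nq w' by auto
    have "c2m (c1n p) \<le> c2m (c1n t)" using Ftau_le[OF c2m, of "c1n p" "c1n t"] r c1np c1nq w' J a by auto
    moreover have "x0 - \<delta> < c2m (c1n p)" using m unfolding c2m_def by simp
    moreover have "c2m (c1n t) \<in> {a<..<w'}" using fixo_maps[OF c2m c2mfx r'] .
    ultimately show ?thesis unfolding c_def using w' by auto
  qed
  have w01: "0 < w" "w < 1" using w pq by auto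
  obtain N where N: "(Tm 0 1 ^^ N) w < p" using push_T[OF w01 pq(1)] by blast
  define k where "k = Tm 0 1 ^^ N"
  have k: "k \<in> Ftau_set" unfolding k_def using funpow_Ftau[OF T_Ftau] .
  define d where "d = comm c k"
  have dD: "d \<in> DD" unfolding d_def using comm_DD[OF c k] .
  have w1fx: "fixo (k ` {a..w}) (k \<circ> finv c \<circ> finv k)" using fixo_conj[OF k fixo_finv[OF c cfx]] .
  have kimg: "k ` {a..w} \<subseteq> {k a..k w}" using Ftau_image_interval[OF k, of a w] a w by auto
  have "\<forall>t\<in>{p..q}. d t \<in> {x0-\<delta><..<x0+\<delta>}"
  proof
    fix t assume t: "t \<in> {p..q}"
    have "t \<notin> k ` {a..w}" using kimg N t unfolding k_def by auto
    then have "(k \<circ> finv c \<circ> finv k) t = t" using w1fx unfolding fixo_def by blast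
    then have "d t = c t" unfolding d_def comm_apply by simp
    then show "d t \<in> {x0-\<delta><..<x0+\<delta>}" using cJ[OF t] by simp
  qed
  then show ?thesis using dD by blast
qed

lemma DD_nontrivial: "\<exists>d\<in>DD. d \<noteq> id"
proof -
  define a where "a = tau * tau"
  have a: "a \<in> Ztau" "0 < a" "a < tau" unfolding a_def using Ztau_mult[OF Ztau_tau Ztau_tau] tau_pos tau_less1 by auto
  define u where "u = Tm a tau"
  have u: "u \<in> Ftau_set" unfolding u_def using Tm_Ftau[of a tau] a Ztau_tau tau_less1 by auto
  have ufx: "fixo {a..tau} u" unfolding u_def by (rule fixo_mono[OF Tm_fixo[OF a(3)]]) auto
  obtain N where N: "(Tm 0 1 ^^ N) tau < a" using push_T[of tau a] tau_pos tau_less1 a by auto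
  define k where "k = Tm 0 1 ^^ N"
  have k: "k \<in> Ftau_set" unfolding k_def using funpow_Ftau[OF T_Ftau] .
  have w1fx: "fixo (k ` {a..tau}) (k \<circ> finv u \<circ> finv k)" using fixo_conj[OF k fixo_finv[OF u ufx]] .
  have kimg: "k ` {a..tau} \<subseteq> {k a..k tau}" using Ftau_image_interval[OF k, of a tau] a tau_less1 by auto
  define t where "t = (a + tau) / 2"
  have t: "a < t" "t < tau" unfolding t_def using a by auto
  have "t \<notin> k ` {a..tau}" using kimg N t unfolding k_def by auto
  then have "(k \<circ> finv u \<circ> finv k) t = t" using w1fx unfolding fixo_def by blast
  then have "comm u k t = u t" unfolding comm_apply by simp
  also have "\<dots> < t" unfolding u_def using Tm_less t by auto
  finally have "comm u k \<noteq> id" by auto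
  then show ?thesis using comm_DD[OF u k] by blast
qed


definition Gc :: "(real \<Rightarrow> real) \<Rightarrow> bool" where
  "Gc u \<longleftrightarrow> u \<in> Ftau_set \<and> (\<exists>p q. 0 < p \<and> p \<le> q \<and> q < 1 \<and> fixo {p..q} u)"

lemma agree_exists:
  assumes b: "\<beta> \<in> Ftau_set" and pq: "0 < p" "p \<le> q" "q < 1"
  shows "\<exists>s. Gc s \<and> (\<forall>t\<in>{p..q}. s t = \<beta> t)"
proof -
  obtain k0 where k0: "germ0 \<beta> k0" using Ftau_germ0[OF b] by blast
  obtain k1 where k1: "germ1 \<beta> k1" using Ftau_germ1[OF b] by blast
  obtain p' where p': "p' \<in> Ztau" "0 < p'" "p' < p" using Ztau_dense[of 0 p] pq by auto
  obtain q' where q': "q' \<in> Ztau" "q < q'" "q' < 1" using Ztau_dense[of q 1] pq by auto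
  define A where "A = Tm 0 p'"
  define B where "B = Tm q' 1"
  have A: "A \<in> Ftau_set" unfolding A_def using Tm_Ftau[of 0 p'] p' Ztau_0 pq by auto
  have B: "B \<in> Ftau_set" unfolding B_def using Tm_Ftau[of q' 1] q' Ztau_1 pq by auto
  have gA0: "germ0 A 1" unfolding A_def using Tm_germ0_left p' by auto
  have gA1: "germ1 A 0" unfolding A_def using Tm_germ1_id p' pq by auto
  have gB0: "germ0 B 0" unfolding B_def using Tm_germ0_id q' pq by auto
  have gB1: "germ1 B (-1)" unfolding B_def using Tm_germ1_right q' by auto
  define r where "r = ipow A (-k0) \<circ> ipow B k1"
  have r: "r \<in> Ftau_set" unfolding r_def using ipow_Ftau[OF A] ipow_Ftau[OF B] Ftau_comp by blast
  have gr0: "germ0 r (-k0)" unfolding r_def using germ0_comp[OF germ0_ipow[OF A gA0, of "-k0"] germ0_ipow[OF B gB0, of "k1"]] by simp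
  have gr1: "germ1 r (-k1)" unfolding r_def using germ1_comp[OF germ1_ipow[OF A gA1, of "-k0"] germ1_ipow[OF B gB1, of "k1"]] by simp
  have Afx: "fixo {0<..<p'} (ipow A (-k0))" unfolding A_def using fixo_ipow[OF _ Tm_fixo] A p' unfolding A_def by auto
  have Bfx: "fixo {q'<..<1} (ipow B k1)" unfolding B_def using fixo_ipow[OF _ Tm_fixo] B q' unfolding B_def by auto
  have rid: "r t = t" if "t \<in> {p..q}" for t
  proof -
    have "ipow B k1 t = t" using Bfx that q' unfolding fixo_def by auto
    moreover have "ipow A (-k0) t = t" using Afx that p' unfolding fixo_def by auto
    ultimately show ?thesis unfolding r_def by simp
  qed
  define s where "s = \<beta> \<circ> r"
  have s: "s \<in> Ftau_set" unfolding s_def using Ftau_comp[OF b r] .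
  have "germ0 s 0" unfolding s_def using germ0_comp[OF k0 gr0] by simp
  moreover have "germ1 s 0" unfolding s_def using germ1_comp[OF k1 gr1] by simp
  ultimately have "Gc s" unfolding Gc_def using germ_compact[OF s] s by blast
  moreover have "\<forall>t\<in>{p..q}. s t = \<beta> t" unfolding s_def using rid by simp
  ultimately show ?thesis by blast
qed

lemma conj_agree:
  assumes b: "\<beta> \<in> Ftau_set" and s: "s \<in> Ftau_set" and c: "c \<in> Ftau_set" and cfx: "fixo S c"
    and ag: "\<forall>t\<in>S. s t = \<beta> t"
  shows "\<beta> \<circ> c \<circ> finv \<beta> = s \<circ> c \<circ> finv s"
proof
  fix y
  define x where "x = finv \<beta> y"
  have bx: "\<beta> x = y" unfolding x_def using Ftau_inv_eqs(1)[OF b] .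
  show "(\<beta> \<circ> c \<circ> finv \<beta>) y = (s \<circ> c \<circ> finv s) y"
  proof (cases "x \<in> S")
    case True
    then have "s x = y" using ag bx by auto
    then have fs: "finv s y = x" using Ftau_inv_eqs(2)[OF s, of x] by simp
    have "c x \<in> S" using fixo_maps[OF c cfx True] .
    then have "s (c x) = \<beta> (c x)" using ag by auto
    then show ?thesis using fs unfolding x_def by simp
  next
    case False
    then have cx: "c x = x" using cfx unfolding fixo_def by auto
    define x' where "x' = finv s y"
    have sx': "s x' = y" unfolding x'_def using Ftau_inv_eqs(1)[OF s] .
    have "x' \<notin> S"
    proof
      assume "x' \<in> S"
      then have "\<beta> x' = y" using ag sx' by auto
      then have "finv \<beta> y = x'" using Ftau_inv_eqs(2)[OF b, of x'] by simp
      then show False using False \<open>x' \<in> S\<close> unfolding x_def by simp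
    qed
    then have "c x' = x'" using cfx unfolding fixo_def by auto
    then show ?thesis using cx bx sx' unfolding x_def x'_def by simp
  qed
qed

lemma comm_agree:
  assumes b: "\<beta> \<in> Ftau_set" and c: "Gc c"
  shows "\<exists>s. Gc s \<and> comm \<beta> c = comm s c"
proof -
  obtain p q where pq: "0 < p" "p \<le> q" "q < 1" "fixo {p..q} c" and cG: "c \<in> Ftau_set" using c unfolding Gc_def by blast
  obtain s where s: "Gc s" "\<forall>t\<in>{p..q}. s t = \<beta> t" using agree_exists[OF b pq(1-3)] by blast
  have sG: "s \<in> Ftau_set" using s unfolding Gc_def by auto
  have "\<beta> \<circ> c \<circ> finv \<beta> = s \<circ> c \<circ> finv s" using conj_agree[OF b sG cG pq(4) s(2)] .
  then have "comm \<beta> c = comm s c" unfolding comm_def by (metis o_assoc)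
  then show ?thesis using s by blast
qed

definition T0 where "T0 = Tm 0 tau"
definition T1 where "T1 = Tm tau 1"

lemma T0: "T0 \<in> Ftau_set" unfolding T0_def using Tm_Ftau[of 0 tau] Ztau_0 Ztau_tau tau_pos tau_less1 by auto
lemma T1: "T1 \<in> Ftau_set" unfolding T1_def using Tm_Ftau[of tau 1] Ztau_1 Ztau_tau tau_pos tau_less1 by auto

definition alpha :: "int \<Rightarrow> int \<Rightarrow> real \<Rightarrow> real" where
  "alpha i j = ipow T0 i \<circ> ipow T1 j"

lemma alpha_Ftau: "alpha i j \<in> Ftau_set"
  unfolding alpha_def using ipow_Ftau[OF T0] ipow_Ftau[OF T1] Ftau_comp by blast

lemma alpha_commute: "alpha i j \<circ> alpha i' j' = alpha i' j' \<circ> alpha i j"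
proof -
  have fx0: "fixo {0<..<tau} (ipow T0 k)" for k unfolding T0_def using fixo_ipow[OF _ Tm_fixo] T0 tau_pos unfolding T0_def by auto
  have fx1: "fixo {tau<..<1} (ipow T1 k)" for k unfolding T1_def using fixo_ipow[OF _ Tm_fixo] T1 tau_less1 unfolding T1_def by auto
  have dis: "{0<..<tau} \<inter> {tau<..<1} = {}" by auto
  have c01: "ipow T0 k \<circ> ipow T1 l = ipow T1 l \<circ> ipow T0 k" for k l
    using fixo_commute[OF ipow_Ftau[OF T0] ipow_Ftau[OF T1] fx0 fx1 dis] .
  have c00: "ipow T0 k \<circ> ipow T0 l = ipow T0 l \<circ> ipow T0 k" for k l using ipow_commute[OF T0] .
  have c11: "ipow T1 k \<circ> ipow T1 l = ipow T1 l \<circ> ipow T1 k" for k l using ipow_commute[OF T1] .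
  have p01: "ipow T0 k (ipow T1 l x) = ipow T1 l (ipow T0 k x)" for k l x using c01[of k l] by (metis comp_apply)
  have p00: "ipow T0 k (ipow T0 l x) = ipow T0 l (ipow T0 k x)" for k l x using c00[of k l] by (metis comp_apply)
  have p11: "ipow T1 k (ipow T1 l x) = ipow T1 l (ipow T1 k x)" for k l x using c11[of k l] by (metis comp_apply)
  show ?thesis
  proof
    fix x
    have "(alpha i j \<circ> alpha i' j') x = ipow T0 i (ipow T1 j (ipow T0 i' (ipow T1 j' x)))" by (simp add: alpha_def)
    also have "\<dots> = ipow T0 i (ipow T0 i' (ipow T1 j (ipow T1 j' x)))" using p01[of i' j "ipow T1 j' x"] by simp
    also have "\<dots> = ipow T0 i' (ipow T0 i (ipow T1 j' (ipow T1 j x)))" using p00[of i i'] p11[of j j'] by simp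
    also have "\<dots> = ipow T0 i' (ipow T1 j' (ipow T0 i (ipow T1 j x)))" using p01[of i j' "ipow T1 j x"] by simp
    also have "\<dots> = (alpha i' j' \<circ> alpha i j) x" by (simp add: alpha_def)
    finally show "(alpha i j \<circ> alpha i' j') x = (alpha i' j' \<circ> alpha i j) x" .
  qed
qed

lemma decompose: assumes a: "a \<in> Ftau_set"
  shows "\<exists>i j ac. Gc ac \<and> a = alpha i j \<circ> ac"
proof -
  obtain k0 where k0: "germ0 a k0" using Ftau_germ0[OF a] by blast
  obtain k1 where k1: "germ1 a k1" using Ftau_germ1[OF a] by blast
  have g00: "germ0 T0 1" unfolding T0_def using Tm_germ0_left tau_pos by auto
  have g01: "germ1 T0 0" unfolding T0_def using Tm_germ1_id tau_pos tau_less1 by auto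
  have g10: "germ0 T1 0" unfolding T1_def using Tm_germ0_id tau_pos tau_less1 by auto
  have g11: "germ1 T1 (-1)" unfolding T1_def using Tm_germ1_right tau_less1 by auto
  define al where "al = alpha k0 (-k1)"
  have al: "al \<in> Ftau_set" unfolding al_def using alpha_Ftau .
  have ga0: "germ0 al k0" unfolding al_def alpha_def using germ0_comp[OF germ0_ipow[OF T0 g00, of k0] germ0_ipow[OF T1 g10, of "-k1"]] by simp
  have ga1: "germ1 al k1" unfolding al_def alpha_def using germ1_comp[OF germ1_ipow[OF T0 g01, of k0] germ1_ipow[OF T1 g11, of "-k1"]] by simp
  define ac where "ac = finv al \<circ> a"
  have ac: "ac \<in> Ftau_set" unfolding ac_def using Ftau_comp[OF Ftau_inv[OF al] a] .
  have "germ0 ac 0" unfolding ac_def using germ0_comp[OF germ0_inv[OF al ga0] k0] by simp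
  moreover have "germ1 ac 0" unfolding ac_def using germ1_comp[OF germ1_inv[OF al ga1] k1] by simp
  ultimately have "Gc ac" unfolding Gc_def using germ_compact[OF ac] ac by blast
  moreover have "a = al \<circ> ac" unfolding ac_def using Ftau_inv_eqs(1)[OF al] by (auto simp: fun_eq_iff)
  ultimately show ?thesis unfolding al_def by blast
qed

lemma finv_comm: assumes "f \<in> Ftau_set" "g \<in> Ftau_set" shows "finv (comm f g) = comm g f"
proof -
  have "comm f g \<circ> comm g f = id" unfolding comm_def
    using Ftau_inv_eqs[OF assms(1)] Ftau_inv_eqs[OF assms(2)] by (auto simp: fun_eq_iff)
  then have "finv (comm f g) = finv (comm f g) \<circ> (comm f g \<circ> comm g f)" by simp
  also have "\<dots> = comm g f"
    using Ftau_inv_eqs(2)[OF comm_Ftau[OF assms]] by (auto simp: fun_eq_iff)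
  finally show ?thesis .
qed

lemma conj_comm: assumes "c \<in> Ftau_set" "x \<in> Ftau_set" "y \<in> Ftau_set"
  shows "c \<circ> comm x y \<circ> finv c = comm (c \<circ> x \<circ> finv c) (c \<circ> y \<circ> finv c)"
proof -
  have ic: "finv c \<in> Ftau_set" using Ftau_inv[OF assms(1)] .
  have fx: "finv (c \<circ> x \<circ> finv c) = c \<circ> finv x \<circ> finv c"
    using finv_comp[OF Ftau_comp[OF assms(1,2)] ic] finv_comp[OF assms(1,2)] finv_finv[OF assms(1)] by (simp add: o_assoc)
  have fy: "finv (c \<circ> y \<circ> finv c) = c \<circ> finv y \<circ> finv c"
    using finv_comp[OF Ftau_comp[OF assms(1,3)] ic] finv_comp[OF assms(1,3)] finv_finv[OF assms(1)] by (simp add: o_assoc)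
  show ?thesis unfolding comm_def fx fy using Ftau_inv_eqs[OF assms(1)] by (auto simp: fun_eq_iff)
qed

lemma conj_comp: assumes "c \<in> Ftau_set"
  shows "c \<circ> (x \<circ> y) \<circ> finv c = (c \<circ> x \<circ> finv c) \<circ> (c \<circ> y \<circ> finv c)"
  using Ftau_inv_eqs[OF assms] by (auto simp: fun_eq_iff)

lemma conj_finv: assumes "c \<in> Ftau_set" "x \<in> Ftau_set"
  shows "c \<circ> finv x \<circ> finv c = finv (c \<circ> x \<circ> finv c)"
  using finv_comp[OF Ftau_comp[OF assms(1,2)] Ftau_inv[OF assms(1)]] finv_comp[OF assms(1,2)] finv_finv[OF assms(1)]
  by (simp add: o_assoc)

lemma conj_conj: assumes "c \<in> Ftau_set" "c' \<in> Ftau_set"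
  shows "c' \<circ> (c \<circ> x \<circ> finv c) \<circ> finv c' = (c' \<circ> c) \<circ> x \<circ> finv (c' \<circ> c)"
  using finv_comp[OF assms(2,1)] by (simp add: o_assoc)

lemma stepE_identity:
  assumes al: "al \<in> Ftau_set" and be: "be \<in> Ftau_set" and ac: "ac \<in> Ftau_set" and bc: "bc \<in> Ftau_set"
    and ab: "al \<circ> be = be \<circ> al"
  shows "comm (al \<circ> ac) (be \<circ> bc) =
    (al \<circ> (comm ac be \<circ> (be \<circ> comm ac bc \<circ> finv be)) \<circ> finv al) \<circ> (be \<circ> comm al bc \<circ> finv be)"
proof -
  have ab': "be (al z) = al (be z)" for z using ab by (metis comp_apply)
  note e = Ftau_inv_eqs[OF al] Ftau_inv_eqs[OF be] Ftau_inv_eqs[OF ac] Ftau_inv_eqs[OF bc]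
  show ?thesis unfolding comm_def finv_comp[OF al ac] finv_comp[OF be bc]
    by (auto simp: fun_eq_iff e ab')
qed


locale NH =
  fixes H :: "(real \<Rightarrow> real) set" and g :: "real \<Rightarrow> real" and x0 \<delta> :: real
  assumes Hsub: "H \<subseteq> DD"
    and Hcomp: "\<And>h1 h2. h1 \<in> H \<Longrightarrow> h2 \<in> H \<Longrightarrow> h1 \<circ> h2 \<in> H"
    and Hfinv: "\<And>h. h \<in> H \<Longrightarrow> finv h \<in> H"
    and Hconj: "\<And>d h. d \<in> DD \<Longrightarrow> h \<in> H \<Longrightarrow> d \<circ> h \<circ> finv d \<in> H"
    and gH: "g \<in> H"
    and dpos: "\<delta> > 0" and dl: "0 < x0 - \<delta>" and dr: "x0 + \<delta> < 1"
    and gJ: "\<forall>t\<in>{x0-\<delta><..<x0+\<delta>}. g t \<notin> {x0-\<delta><..<x0+\<delta>}"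
begin

lemma H_Ftau: "h \<in> H \<Longrightarrow> h \<in> Ftau_set" using Hsub DD_sub by auto

lemma stepB:
  assumes x: "x \<in> DD" "fixo {x0-\<delta><..<x0+\<delta>} x" and y: "y \<in> DD" "fixo {x0-\<delta><..<x0+\<delta>} y"
  shows "comm x y \<in> H"
proof -
  define J where "J = {x0-\<delta><..<x0+\<delta>}"
  have gG: "g \<in> Ftau_set" using H_Ftau gH by auto
  have xG: "x \<in> Ftau_set" and yG: "y \<in> Ftau_set" using x y DD_sub by auto
  define z where "z = g \<circ> finv x \<circ> finv g"
  have zG: "z \<in> Ftau_set" unfolding z_def using gG xG Ftau_comp Ftau_inv by simp
  have zfx: "fixo (g ` J) z" unfolding z_def using fixo_conj[OF gG fixo_finv[OF xG x(2)[folded J_def]]] .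
  have dis: "g ` J \<inter> J = {}" using gJ unfolding J_def by auto
  have zy: "z \<circ> y = y \<circ> z" using fixo_commute[OF zG yG zfx y(2)[folded J_def] dis] .
  have zy': "z (y v) = y (z v)" for v using zy by (metis comp_apply)
  have h: "comm x g \<in> H"
  proof -
    have "comm x g = (x \<circ> g \<circ> finv x) \<circ> finv g" unfolding comm_def by (simp add: o_assoc)
    then show ?thesis using Hcomp[OF Hconj[OF x(1) gH] Hfinv[OF gH]] by simp
  qed
  have hy: "comm (comm x g) y \<in> H"
  proof -
    have "comm (comm x g) y = comm x g \<circ> (y \<circ> finv (comm x g) \<circ> finv y)" unfolding comm_def[of "comm x g"] by (simp add: o_assoc)
    then show ?thesis using Hcomp[OF h Hconj[OF y(1) Hfinv[OF h]]] by simp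
  qed
  have cx: "comm x g = x \<circ> z" unfolding comm_def z_def by (simp add: o_assoc)
  have "comm (comm x g) y = comm x y"
    unfolding cx comm_def[of "x \<circ> z"] finv_comp[OF xG zG]
    using Ftau_inv_eqs[OF zG] by (auto simp: fun_eq_iff zy' comm_apply)
  then show ?thesis using hy by simp
qed

lemma stepC:
  assumes x: "x \<in> DD" "fixo {p..q} x" and y: "y \<in> DD" "fixo {p..q} y" and pq: "0 < p" "p \<le> q" "q < 1"
  shows "comm x y \<in> H"
proof -
  obtain d where d: "d \<in> DD" "\<forall>t\<in>{p..q}. d t \<in> {x0-\<delta><..<x0+\<delta>}" using compress[OF dpos dl dr pq] by blast
  have dG: "d \<in> Ftau_set" using d DD_sub by auto
  have xG: "x \<in> Ftau_set" and yG: "y \<in> Ftau_set" using x y DD_sub by auto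
  have sub: "d ` {p..q} \<subseteq> {x0-\<delta><..<x0+\<delta>}" using d by auto
  have x': "d \<circ> x \<circ> finv d \<in> DD" using DD_comp[OF DD_comp[OF d(1) x(1)] DD_finv[OF d(1)]] .
  have y': "d \<circ> y \<circ> finv d \<in> DD" using DD_comp[OF DD_comp[OF d(1) y(1)] DD_finv[OF d(1)]] .
  have x'fx: "fixo {x0-\<delta><..<x0+\<delta>} (d \<circ> x \<circ> finv d)" using fixo_mono[OF fixo_conj[OF dG x(2)] sub] .
  have y'fx: "fixo {x0-\<delta><..<x0+\<delta>} (d \<circ> y \<circ> finv d)" using fixo_mono[OF fixo_conj[OF dG y(2)] sub] .
  have "comm (d \<circ> x \<circ> finv d) (d \<circ> y \<circ> finv d) \<in> H" using stepB[OF x' x'fx y' y'fx] .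
  then have 1: "d \<circ> comm x y \<circ> finv d \<in> H" using conj_comm[OF dG xG yG] by simp
  have "finv d \<circ> (d \<circ> comm x y \<circ> finv d) \<circ> finv (finv d) \<in> H" using Hconj[OF DD_finv[OF d(1)] 1] .
  moreover have "finv d \<circ> (d \<circ> comm x y \<circ> finv d) \<circ> finv (finv d) = comm x y"
    unfolding finv_finv[OF dG] using Ftau_inv_eqs[OF dG] by (auto simp: fun_eq_iff)
  ultimately show ?thesis by simp
qed

lemma stepD:
  assumes u: "u \<in> Ftau_set" "fixo {p..q} u" and v: "v \<in> Ftau_set" "fixo {p..q} v" and pq: "0 < p" "p \<le> q" "q < 1"
  shows "comm u v \<in> H"
proof -
  have q01: "0 < q" "q < 1" "0 < p" "p < 1" using pq by auto
  obtain n where n: "(Tm 0 1 ^^ n) q < p" using push_T[OF q01(1,2) pq(1)] by blast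
  obtain n' where n': "q < (finv (Tm 0 1) ^^ n') p" using push_Tinv[OF q01(3,4) pq(3)] by blast
  define k where "k = Tm 0 1 ^^ n"
  define m where "m = finv (Tm 0 1) ^^ n'"
  have k: "k \<in> Ftau_set" unfolding k_def using funpow_Ftau[OF T_Ftau] .
  have m: "m \<in> Ftau_set" unfolding m_def using funpow_Ftau[OF Ftau_inv[OF T_Ftau]] .
  have kp: "0 < k p" using fixo_maps[OF k fixo_T_pow(1)[of n, folded k_def], of p] q01 by auto
  have mq: "m q < 1" using fixo_maps[OF m fixo_T_pow(2)[of n', folded m_def], of q] q01 by auto
  have kq: "k q < p" using n unfolding k_def .
  have mp: "q < m p" using n' unfolding m_def .
  have kpq: "k p \<le> k q" using Ftau_le[OF k, of p q] pq by auto
  have mpq: "m p \<le> m q" using Ftau_le[OF m, of p q] pq by auto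
  define w1 where "w1 = k \<circ> finv u \<circ> finv k"
  define w2 where "w2 = m \<circ> finv v \<circ> finv m"
  have w1G: "w1 \<in> Ftau_set" unfolding w1_def using k u Ftau_comp Ftau_inv by simp
  have w2G: "w2 \<in> Ftau_set" unfolding w2_def using m v Ftau_comp Ftau_inv by simp
  have w1fx: "fixo {k p..k q} w1" unfolding w1_def
    using fixo_mono[OF fixo_conj[OF k fixo_finv[OF u]] Ftau_image_interval[OF k]] pq by auto
  have w2fx: "fixo {m p..m q} w2" unfolding w2_def
    using fixo_mono[OF fixo_conj[OF m fixo_finv[OF v]] Ftau_image_interval[OF m]] pq by auto
  have c1: "w1 \<circ> v = v \<circ> w1" using fixo_commute[OF w1G v(1) w1fx v(2)] kq by auto
  have c2: "w1 \<circ> w2 = w2 \<circ> w1" using fixo_commute[OF w1G w2G w1fx w2fx] kq mp pq by auto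
  have c3: "w2 \<circ> u = u \<circ> w2" using fixo_commute[OF w2G u(1) w2fx u(2)] mp by auto
  have c1': "w1 (v z) = v (w1 z)" for z using c1 by (metis comp_apply)
  have c2': "w1 (w2 z) = w2 (w1 z)" for z using c2 by (metis comp_apply)
  have c3': "w2 (finv u z) = finv u (w2 z)" for z
  proof -
    have "u (w2 (finv u z)) = w2 (u (finv u z))" using c3 by (metis comp_apply)
    then have "finv u (u (w2 (finv u z))) = finv u (w2 z)" using Ftau_inv_eqs(1)[OF u(1)] by simp
    then show ?thesis using Ftau_inv_eqs(2)[OF u(1)] by simp
  qed
  have a': "comm u k = u \<circ> w1" unfolding comm_def w1_def by (simp add: o_assoc)
  have b': "comm v m = v \<circ> w2" unfolding comm_def w2_def by (simp add: o_assoc)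
  have aD: "u \<circ> w1 \<in> DD" using comm_DD[OF u(1) k] a' by simp
  have bD: "v \<circ> w2 \<in> DD" using comm_DD[OF v(1) m] b' by simp
  have s1: "{p..q} \<subseteq> {k p..m q}" "{k p..k q} \<subseteq> {k p..m q}" "{m p..m q} \<subseteq> {k p..m q}"
    using kq mp kpq mpq pq by auto
  have afx: "fixo {k p..m q} (u \<circ> w1)" using fixo_comp[OF fixo_mono[OF u(2) s1(1)] fixo_mono[OF w1fx s1(2)]] .
  have bfx: "fixo {k p..m q} (v \<circ> w2)" using fixo_comp[OF fixo_mono[OF v(2) s1(1)] fixo_mono[OF w2fx s1(3)]] .
  have kpmq: "k p \<le> m q" using kpq kq pq mp mpq by linarith
  have "comm (u \<circ> w1) (v \<circ> w2) \<in> H" using stepC[OF aD afx bD bfx kp kpmq mq] .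
  moreover have "comm (u \<circ> w1) (v \<circ> w2) = comm u v"
    unfolding comm_def finv_comp[OF u(1) w1G] finv_comp[OF v(1) w2G]
    using Ftau_inv_eqs[OF w1G] Ftau_inv_eqs[OF w2G] by (auto simp: fun_eq_iff c1' c2' c3')
  ultimately show ?thesis by simp
qed

definition Q where "Q x \<longleftrightarrow> x \<in> Ftau_set \<and> x \<in> H \<and> (\<forall>c\<in>Ftau_set. c \<circ> x \<circ> finv c \<in> H)"

lemma Q_comp: assumes "Q x" "Q y" shows "Q (x \<circ> y)"
  using assms unfolding Q_def using conj_comp Hcomp Ftau_comp by auto

lemma Q_finv: assumes "Q x" shows "Q (finv x)"
  using assms unfolding Q_def using conj_finv Hfinv Ftau_inv by auto

lemma Q_conj: assumes "Q x" "c \<in> Ftau_set" shows "Q (c \<circ> x \<circ> finv c)"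
proof -
  have "c \<circ> x \<circ> finv c \<in> Ftau_set" using assms Ftau_comp Ftau_inv unfolding Q_def by simp
  moreover have "c \<circ> x \<circ> finv c \<in> H" using assms unfolding Q_def by auto
  moreover have "\<forall>c'\<in>Ftau_set. c' \<circ> (c \<circ> x \<circ> finv c) \<circ> finv c' \<in> H"
    using assms conj_conj Ftau_comp unfolding Q_def by auto
  ultimately show ?thesis unfolding Q_def by blast
qed

lemma Q_comm_Gc: assumes u: "Gc u" and v: "Gc v" shows "Q (comm u v)"
proof -
  obtain p1 q1 where 1: "0 < p1" "p1 \<le> q1" "q1 < 1" "fixo {p1..q1} u" and uG: "u \<in> Ftau_set" using u unfolding Gc_def by blast
  obtain p2 q2 where 2: "0 < p2" "p2 \<le> q2" "q2 < 1" "fixo {p2..q2} v" and vG: "v \<in> Ftau_set" using v unfolding Gc_def by blast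
  define p where "p = min p1 p2"
  define q where "q = max q1 q2"
  have pq: "0 < p" "p \<le> q" "q < 1" unfolding p_def q_def using 1 2 by auto
  have ufx: "fixo {p..q} u" using fixo_mono[OF 1(4)] unfolding p_def q_def by auto
  have vfx: "fixo {p..q} v" using fixo_mono[OF 2(4)] unfolding p_def q_def by auto
  have "comm u v \<in> H" using stepD[OF uG ufx vG vfx pq] .
  moreover have "\<forall>c\<in>Ftau_set. c \<circ> comm u v \<circ> finv c \<in> H"
  proof
    fix c assume c: "c \<in> Ftau_set"
    have cpq: "0 < c p" "c p \<le> c q" "c q < 1" using Ftau_open01[OF c, of p] Ftau_open01[OF c, of q] Ftau_le[OF c, of p q] pq by auto
    have sub: "c ` {p..q} \<subseteq> {c p..c q}" using Ftau_image_interval[OF c] pq by auto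
    have "comm (c \<circ> u \<circ> finv c) (c \<circ> v \<circ> finv c) \<in> H"
      using stepD[OF _ fixo_mono[OF fixo_conj[OF c ufx] sub] _ fixo_mono[OF fixo_conj[OF c vfx] sub] cpq]
        c uG vG Ftau_comp Ftau_inv by simp
    then show "c \<circ> comm u v \<circ> finv c \<in> H" using conj_comm[OF c uG vG] by simp
  qed
  ultimately show ?thesis unfolding Q_def using comm_Ftau[OF uG vG] by blast
qed

lemma Q_comm_G_Gc: assumes b: "b \<in> Ftau_set" and c: "Gc c" shows "Q (comm b c)"
  using comm_agree[OF b c] Q_comm_Gc[OF _ c] by auto

lemma stepE: assumes a: "a \<in> Ftau_set" and b: "b \<in> Ftau_set" shows "Q (comm a b)"
proof -
  obtain i j ac where ac: "Gc ac" and adec: "a = alpha i j \<circ> ac" using decompose[OF a] by blast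
  obtain i' j' bc where bc: "Gc bc" and bdec: "b = alpha i' j' \<circ> bc" using decompose[OF b] by blast
  define al where "al = alpha i j"
  define be where "be = alpha i' j'"
  have al: "al \<in> Ftau_set" and be: "be \<in> Ftau_set" unfolding al_def be_def using alpha_Ftau by auto
  have acG: "ac \<in> Ftau_set" and bcG: "bc \<in> Ftau_set" using ac bc unfolding Gc_def by auto
  have ab: "al \<circ> be = be \<circ> al" unfolding al_def be_def using alpha_commute .
  have q1: "Q (comm ac be)"
  proof -
    have "Q (finv (comm be ac))" using Q_finv[OF Q_comm_G_Gc[OF be ac]] .
    then show ?thesis using finv_comm[OF be acG] by simp
  qed
  have q2: "Q (comm ac bc)" using Q_comm_Gc[OF ac bc] .
  have q3: "Q (comm al bc)" using Q_comm_G_Gc[OF al bc] .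
  have "Q ((al \<circ> (comm ac be \<circ> (be \<circ> comm ac bc \<circ> finv be)) \<circ> finv al) \<circ> (be \<circ> comm al bc \<circ> finv be))"
    using Q_comp[OF Q_conj[OF Q_comp[OF q1 Q_conj[OF q2 be]] al] Q_conj[OF q3 be]] .
  then show ?thesis unfolding adec bdec al_def[symmetric] be_def[symmetric]
    using stepE_identity[OF al be acG bcG ab] by simp
qed

lemma DD_in_H: "DD \<subseteq> H"
proof -
  have sg: "subgroup H Ftau"
  proof (rule group.subgroupI[OF Ftau_group])
    show "H \<subseteq> carrier Ftau" using Hsub DD_sub by auto
    show "H \<noteq> {}" using gH by auto
    show "\<And>a. a \<in> H \<Longrightarrow> inv\<^bsub>Ftau\<^esub> a \<in> H" using Hfinv Ftau_m_inv H_Ftau by simp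
    show "\<And>a b. a \<in> H \<Longrightarrow> b \<in> H \<Longrightarrow> a \<otimes>\<^bsub>Ftau\<^esub> b \<in> H" using Hcomp by simp
  qed
  have "derived_set Ftau Ftau_set \<subseteq> H"
  proof
    fix x assume "x \<in> derived_set Ftau Ftau_set"
    then obtain h1 h2 where h: "h1 \<in> Ftau_set" "h2 \<in> Ftau_set"
      "x = h1 \<otimes>\<^bsub>Ftau\<^esub> h2 \<otimes>\<^bsub>Ftau\<^esub> inv\<^bsub>Ftau\<^esub> h1 \<otimes>\<^bsub>Ftau\<^esub> inv\<^bsub>Ftau\<^esub> h2" by auto
    then have "x = comm h1 h2" by (simp add: Ftau_m_inv comm_def)
    then show "x \<in> H" using stepE[OF h(1,2)] unfolding Q_def by simp
  qed
  then show ?thesis unfolding derived_def using group.generate_subgroup_incl[OF Ftau_group _ sg] by simp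
qed

end


theorem mainTheorem5:
  shows "simple_grp (Ftau\<lparr>carrier := derived Ftau (carrier Ftau)\<rparr>)"
proof -
  define DG where "DG = Ftau\<lparr>carrier := DD\<rparr>"
  have grp: "group DG" unfolding DG_def using group.subgroup_imp_group[OF Ftau_group DD_subgroup] .
  have one: "\<one>\<^bsub>DG\<^esub> = id" unfolding DG_def by simp
  have car: "carrier DG = DD" unfolding DG_def by simp
  have mult: "x \<otimes>\<^bsub>DG\<^esub> y = x \<circ> y" for x y unfolding DG_def by simp
  have inv: "inv\<^bsub>DG\<^esub> x = finv x" if "x \<in> DD" for x
    unfolding DG_def using group.m_inv_consistent[OF Ftau_group DD_subgroup that] Ftau_m_inv DD_sub that by auto
  have nt: "carrier DG \<noteq> {\<one>\<^bsub>DG\<^esub>}" unfolding car one using DD_nontrivial by auto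
  have norm: "H = carrier DG \<or> H = {\<one>\<^bsub>DG\<^esub>}" if H: "H \<lhd> DG" for H
  proof -
    have sg: "subgroup H DG" and cl: "\<forall>x\<in>carrier DG. \<forall>h\<in>H. x \<otimes>\<^bsub>DG\<^esub> h \<otimes>\<^bsub>DG\<^esub> inv\<^bsub>DG\<^esub> x \<in> H"
      using group.normal_inv_iff[OF grp] H by auto
    have Hsub: "H \<subseteq> DD" using subgroup.subset[OF sg] car by simp
    have Hcomp: "h1 \<circ> h2 \<in> H" if "h1 \<in> H" "h2 \<in> H" for h1 h2 using subgroup.m_closed[OF sg that] mult by simp
    have Hfinv: "finv h \<in> H" if "h \<in> H" for h using subgroup.m_inv_closed[OF sg that] inv Hsub that by auto
    have Hconj: "d \<circ> h \<circ> finv d \<in> H" if "d \<in> DD" "h \<in> H" for d h using cl that car mult inv by auto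
    have Hid: "id \<in> H" using subgroup.one_closed[OF sg] one by simp
    show ?thesis
    proof (cases "H = {id}")
      case True then show ?thesis using one by simp
    next
      case False
      then obtain g where gH: "g \<in> H" "g \<noteq> id" using Hid by auto
      then obtain x0 where x0: "g x0 \<noteq> x0" by (auto simp: fun_eq_iff)
      have gG: "g \<in> Ftau_set" using gH Hsub DD_sub by auto
      obtain c \<delta> where cd: "\<delta> > 0" "0 < c - \<delta>" "c + \<delta> < 1" "\<forall>t\<in>{c-\<delta><..<c+\<delta>}. g t \<notin> {c-\<delta><..<c+\<delta>}"
        using stepA[OF gG x0] by blast
      interpret NH H g c \<delta>
        using Hsub Hcomp Hfinv Hconj gH(1) cd by unfold_locales auto
      have "DD \<subseteq> H" using DD_in_H .
      then have "H = DD" using Hsub by auto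
      then show ?thesis using car by simp
    qed
  qed
  show ?thesis unfolding simple_grp_def using grp nt norm unfolding DG_def by simp
qed

end
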